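(* Let $R$ be a $\mathbb{G}$-stopping time and $[R]=\{(t,\omega)\in\mathbb{R}_+\times\Omega: t=R(\omega)\}$ its graph. Then $[R]\in\mathcal{L}^o$ if and only if $$\{R<\infty\}\cap\mathcal{G}_R=\{R<\infty\}\cap\big(\mathcal{N}\vee\sigma(\tau\nmid R)\vee\mathcal{F}_R\big).$$
   Context: Let $(\Omega,\mathcal{A},\mathbb{Q})$ be a probability space with a right-continuous filtration $\mathbb{F}=(\mathcal{F}_t)_{t\ge0}$ such that $\mathcal{F}_0$ contains $\mathcal{N}^{\mathcal{F}_\infty}$, where for a $\sigma$-algebra $\mathcal{T}\subset\mathcal{A}$, $\mathcal{N}^{\mathcal{T}}$ denotes the $\sigma$-algebra generated by all subsets of $\mathcal{T}$-measurable $\mathbb{Q}$-null sets. Let $\tau$ be a random variable with values in $[0,\infty]$, let $\mathcal{N}=\mathcal{N}^{\sigma(\tau)\vee\mathcal{F}_\infty}$, and let $\mathbb{G}=(\mathcal{G}_t)_{t\ge0}$ with $\mathcal{G}_t=\mathcal{N}\vee\bigcap_{s>t}(\mathcal{F}_s\vee\sigma(\tau\wedge s))$. Identities are understood up to $\mathcal{N}$-measurable $\mathbb{Q}$-null sets. For a function $Y''$ on $[0,\infty]\times(\mathbb{R}_+\times\Omega)$, $Y''(\tau)$ denotes $(t,\omega)\mapsto Y''(\tau(\omega),t,\omega)$. A $\mathbb{G}$-optional process $Y$ satisfies the optional splitting formula on a $\mathbb{G}$-optional set $A$ if there exist $Y'\in\mathcal{O}(\mathbb{F})$ and a $\mathcal{B}[0,\infty]\otimes\mathcal{O}(\mathbb{F})$-measurable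 $Y''$ with $Y\mathbf{1}_A=(Y'\mathbf{1}_{[0,\tau)}+Y''(\tau)\mathbf{1}_{[\tau,\infty)})\mathbf{1}_A$; $\mathcal{L}^o$ is the family of $\mathbb{G}$-optional sets on which every $\mathbb{G}$-optional process satisfies it. For a random time $R$, $\mathcal{F}_R=\sigma\{X_R\mathbf{1}_{\{R<\infty\}}: X\ \mathbb{F}\text{-optional}\}$. For $a,b\in[0,\infty]$, $a\nmid b=a$ if $a\le b$ and $=\infty$ if $a>b$ (so $\tau\nmid R$ is the random variable $\omega\mapsto\tau(\omega)\nmid R(\omega)$). For a set $D\subset\Omega$ and a $\sigma$-algebra $\mathcal{T}$, $D\cap\mathcal{T}=\{D\cap B: B\in\mathcal{T}\}$. *)

theory Defs
  imports "HOL-Probability.Probability"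
begin

(* All sigma-algebras on Omega are represented as families of subsets of Omega
   (type 'a set set); sigma-algebras on R_+ x Omega as families of subsets of
   {0..} x Omega. *)

definition sigma_fun :: "'a set \<Rightarrow> ('a \<Rightarrow> 'b::topological_space) \<Rightarrow> 'a set set" where
  "sigma_fun \<Omega> f = sigma_sets \<Omega> {f -` B \<inter> \<Omega> | B. B \<in> sets borel}"

definition null_sigma :: "'a measure \<Rightarrow> 'a set set \<Rightarrow> 'a set set" where
  "null_sigma M T = sigma_sets (space M)
     {D. D \<subseteq> space M \<and> (\<exists>E\<in>T. E \<in> sets M \<and> emeasure M E = 0 \<and> D \<subseteq> E)}"

definition Finf :: "'a set \<Rightarrow> (real \<Rightarrow> 'a set set) \<Rightarrow> 'a set set" where
  "Finf \<Omega> F = sigma_sets \<Omega> (\<Union>t\<in>{0..}. F t)"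

definition usual_filtration :: "'a measure \<Rightarrow> (real \<Rightarrow> 'a set set) \<Rightarrow> bool" where
  "usual_filtration M F \<longleftrightarrow>
     (\<forall>t\<ge>0. sigma_algebra (space M) (F t) \<and> F t \<subseteq> sets M) \<and>
     (\<forall>s t. 0 \<le> s \<longrightarrow> s \<le> t \<longrightarrow> F s \<subseteq> F t) \<and>
     (\<forall>t\<ge>0. F t = (\<Inter>s\<in>{t<..}. F s)) \<and>
     null_sigma M (Finf (space M) F) \<subseteq> F 0"

definition Nsig :: "'a measure \<Rightarrow> (real \<Rightarrow> 'a set set) \<Rightarrow> ('a \<Rightarrow> ennreal) \<Rightarrow> 'a set set" where
  "Nsig M F \<tau> = null_sigma M (sigma_sets (space M) (sigma_fun (space M) \<tau> \<union> Finf (space M) F))"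

definition Gfilt :: "'a measure \<Rightarrow> (real \<Rightarrow> 'a set set) \<Rightarrow> ('a \<Rightarrow> ennreal) \<Rightarrow> real \<Rightarrow> 'a set set" where
  "Gfilt M F \<tau> t = sigma_sets (space M)
     (Nsig M F \<tau> \<union>
      (\<Inter>s\<in>{t<..}. sigma_sets (space M)
          (F s \<union> sigma_fun (space M) (\<lambda>\<omega>. min (\<tau> \<omega>) (ennreal s)))))"

definition cadlag_adapted :: "'a set \<Rightarrow> (real \<Rightarrow> 'a set set) \<Rightarrow> (real \<times> 'a \<Rightarrow> real) \<Rightarrow> bool" where
  "cadlag_adapted \<Omega> F X \<longleftrightarrow>
     (\<forall>t\<ge>0. \<forall>B\<in>sets borel. {\<omega>\<in>\<Omega>. X (t, \<omega>) \<in> B} \<in> F t) \<and>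
     (\<forall>\<omega>\<in>\<Omega>. \<forall>t\<ge>0. ((\<lambda>s. X (s, \<omega>)) \<longlongrightarrow> X (t, \<omega>)) (at_right t) \<and>
                   (0 < t \<longrightarrow> (\<exists>l. ((\<lambda>s. X (s, \<omega>)) \<longlongrightarrow> l) (at_left t))))"

definition optional_sets :: "'a set \<Rightarrow> (real \<Rightarrow> 'a set set) \<Rightarrow> (real \<times> 'a) set set" where
  "optional_sets \<Omega> F = sigma_sets ({0..} \<times> \<Omega>)
     {{p \<in> {0..} \<times> \<Omega>. X p \<in> B} | X B. cadlag_adapted \<Omega> F X \<and> B \<in> sets borel}"

definition optional_measure :: "'a set \<Rightarrow> (real \<Rightarrow> 'a set set) \<Rightarrow> (real \<times> 'a) measure" where
  "optional_measure \<Omega> F = measure_of ({0..} \<times> \<Omega>) (optional_sets \<Omega> F) (\<lambda>_. 0)"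

definition splits_on :: "'a measure \<Rightarrow> (real \<Rightarrow> 'a set set) \<Rightarrow> ('a \<Rightarrow> ennreal)
     \<Rightarrow> (real \<times> 'a \<Rightarrow> real) \<Rightarrow> (real \<times> 'a) set \<Rightarrow> bool" where
  "splits_on M F \<tau> Y A \<longleftrightarrow>
     (\<exists>Y' Y''. Y' \<in> borel_measurable (optional_measure (space M) F) \<and>
        (\<lambda>(u::ennreal, p). Y'' u p) \<in> borel_measurable (borel \<Otimes>\<^sub>M optional_measure (space M) F) \<and>
        (\<exists>E. E \<in> sigma_sets (space M) (sigma_fun (space M) \<tau> \<union> Finf (space M) F) \<and>
             E \<in> sets M \<and> emeasure M E = 0 \<and>
             (\<forall>\<omega>\<in>space M - E. \<forall>t\<ge>0. (t, \<omega>) \<in> A \<longrightarrow>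
                Y (t, \<omega>) = (if ennreal t < \<tau> \<omega> then Y' (t, \<omega>) else Y'' (\<tau> \<omega>) (t, \<omega>)))))"

definition Lo :: "'a measure \<Rightarrow> (real \<Rightarrow> 'a set set) \<Rightarrow> ('a \<Rightarrow> ennreal) \<Rightarrow> (real \<times> 'a) set set" where
  "Lo M F \<tau> = {A. A \<in> optional_sets (space M) (Gfilt M F \<tau>) \<and>
     (\<forall>Y. Y \<in> borel_measurable (optional_measure (space M) (Gfilt M F \<tau>)) \<longrightarrow> splits_on M F \<tau> Y A)}"

definition stopping_time_wrt :: "'a set \<Rightarrow> (real \<Rightarrow> 'a set set) \<Rightarrow> ('a \<Rightarrow> ennreal) \<Rightarrow> bool" where
  "stopping_time_wrt \<Omega> G R \<longleftrightarrow> (\<forall>t\<ge>0. {\<omega>\<in>\<Omega>. R \<omega> \<le> ennreal t} \<in> G t)"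

definition stopped_sigma :: "'a set \<Rightarrow> (real \<Rightarrow> 'a set set) \<Rightarrow> ('a \<Rightarrow> ennreal) \<Rightarrow> 'a set set" where
  "stopped_sigma \<Omega> G R = {B \<in> Finf \<Omega> G. \<forall>t\<ge>0. B \<inter> {\<omega>\<in>\<Omega>. R \<omega> \<le> ennreal t} \<in> G t}"

definition random_time_sigma :: "'a set \<Rightarrow> (real \<Rightarrow> 'a set set) \<Rightarrow> ('a \<Rightarrow> ennreal) \<Rightarrow> 'a set set" where
  "random_time_sigma \<Omega> F R = sigma_sets \<Omega>
     {{\<omega>\<in>\<Omega>. (if R \<omega> < \<infinity> then X (enn2real (R \<omega>), \<omega>) else (0::real)) \<in> B} | X B.
        X \<in> borel_measurable (optional_measure \<Omega> F) \<and> B \<in> sets borel}"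

definition ndiv :: "ennreal \<Rightarrow> ennreal \<Rightarrow> ennreal" where
  "ndiv a b = (if a \<le> b then a else \<infinity>)"

definition graph_rt :: "'a set \<Rightarrow> ('a \<Rightarrow> ennreal) \<Rightarrow> (real \<times> 'a) set" where
  "graph_rt \<Omega> R = {(t, \<omega>). 0 \<le> t \<and> \<omega> \<in> \<Omega> \<and> R \<omega> = ennreal t}"

definition trace_on :: "'a set \<Rightarrow> 'a set set \<Rightarrow> 'a set set" where
  "trace_on D T = {D \<inter> B | B. B \<in> T}"

end

theory Submission
  imports Defs
begin

lemma sa_sets: "sigma_algebra \<Omega> A \<Longrightarrow> sets (measure_of \<Omega> A (\<lambda>_. 0)) = A"
  by (rule sigma_algebra.sets_measure_of_eq)
lemma sa_space: "space (measure_of \<Omega> A (\<lambda>_. 0)) = \<Omega>"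
  by (simp add: space_measure_of_conv)
lemma sa_Int: "sigma_algebra \<Omega> A \<Longrightarrow> a \<in> A \<Longrightarrow> b \<in> A \<Longrightarrow> a \<inter> b \<in> A"
  using sets.Int[of a "measure_of \<Omega> A (\<lambda>_. 0)" b] sa_sets by metis
lemma sa_Un: "sigma_algebra \<Omega> A \<Longrightarrow> a \<in> A \<Longrightarrow> b \<in> A \<Longrightarrow> a \<union> b \<in> A"
  using sets.Un[of a "measure_of \<Omega> A (\<lambda>_. 0)" b] sa_sets by metis
lemma sa_Diff: "sigma_algebra \<Omega> A \<Longrightarrow> a \<in> A \<Longrightarrow> b \<in> A \<Longrightarrow> a - b \<in> A"
  using sets.Diff[of a "measure_of \<Omega> A (\<lambda>_. 0)" b] sa_sets by metis
lemma sa_top: "sigma_algebra \<Omega> A \<Longrightarrow> \<Omega> \<in> A"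
  using sets.top[of "measure_of \<Omega> A (\<lambda>_. 0)"] sa_sets sa_space by metis
lemma sa_empty: "sigma_algebra \<Omega> A \<Longrightarrow> {} \<in> A"
  unfolding sigma_algebra_iff2 by auto
lemma sa_compl: "sigma_algebra \<Omega> A \<Longrightarrow> a \<in> A \<Longrightarrow> \<Omega> - a \<in> A"
  unfolding sigma_algebra_iff2 by auto
lemma sa_UN: "sigma_algebra \<Omega> A \<Longrightarrow> (\<And>i::nat. f i \<in> A) \<Longrightarrow> (\<Union>i. f i) \<in> A"
  unfolding sigma_algebra_iff2 by (meson image_subsetI)
lemma sa_Pow: "sigma_algebra \<Omega> A \<Longrightarrow> A \<subseteq> Pow \<Omega>"
  unfolding sigma_algebra_iff2 by auto

lemma ceil_lt: "real_of_int \<lceil>y\<rceil> - 1 < (y::real)"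
  using ceiling_eq_iff[of y "\<lceil>y\<rceil>"] by simp

lemma le_enn_lt_top[simp]: "x \<le> ennreal t \<Longrightarrow> x < top"
  by (metis ennreal_less_top le_less_trans)
lemma le_enn_ne_top[simp]: "x \<le> ennreal t \<Longrightarrow> x \<noteq> top"
  using le_enn_lt_top by fastforce

lemma choice_nat: "(\<And>i::nat. \<exists>x\<in>A. P i x) \<Longrightarrow> \<exists>f. \<forall>i. f i \<in> A \<and> P i (f i)"
proof -
  assume h: "\<And>i::nat. \<exists>x\<in>A. P i x"
  then have "\<forall>i. \<exists>x. x \<in> A \<and> P i x" by blast
  then show ?thesis by (rule choice)
qed

lemma opt_sets: "sets (optional_measure \<Omega> H) = optional_sets \<Omega> H"
proof -
  have P: "{{p \<in> {0..} \<times> \<Omega>. X p \<in> B} |X B. cadlag_adapted \<Omega> H X \<and> B \<in> sets borel} \<subseteq> Pow ({0..} \<times> \<Omega>)"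
    by auto
  have "optional_sets \<Omega> H \<subseteq> Pow ({0..} \<times> \<Omega>)"
    unfolding optional_sets_def by (rule, rule PowI, rule sigma_sets_into_sp[OF P])
  then show ?thesis
    unfolding optional_measure_def
    using sigma_sets_sigma_sets_eq[OF P] by (simp add: sets_measure_of optional_sets_def)
qed

lemma opt_space: "space (optional_measure \<Omega> H) = {0..} \<times> \<Omega>"
  unfolding optional_measure_def by (simp add: space_measure_of_conv)

lemma cadlag_opt_set: "cadlag_adapted \<Omega> H X \<Longrightarrow> B \<in> sets borel \<Longrightarrow> {p\<in>{0..} \<times> \<Omega>. X p \<in> B} \<in> optional_sets \<Omega> H"
  unfolding optional_sets_def by (intro sigma_sets.Basic) blast

lemma cadlag_meas: "cadlag_adapted \<Omega> H X \<Longrightarrow> X \<in> borel_measurable (optional_measure \<Omega> H)"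
proof (rule measurableI)
  fix B :: "real set" assume "cadlag_adapted \<Omega> H X" "B \<in> sets borel"
  moreover have "X -` B \<inter> space (optional_measure \<Omega> H) = {p\<in>{0..} \<times> \<Omega>. X p \<in> B}"
    by (auto simp: opt_space)
  ultimately show "X -` B \<inter> space (optional_measure \<Omega> H) \<in> sets (optional_measure \<Omega> H)"
    using cadlag_opt_set opt_sets by metis
qed auto

lemma opt_preimage: "Y \<in> borel_measurable (optional_measure \<Omega> H) \<Longrightarrow> B \<in> sets borel \<Longrightarrow> {p\<in>{0..} \<times> \<Omega>. Y p \<in> B} \<in> optional_sets \<Omega> H"
proof -
  assume "Y \<in> borel_measurable (optional_measure \<Omega> H)" "B \<in> sets borel"
  then have "Y -` B \<inter> space (optional_measure \<Omega> H) \<in> sets (optional_measure \<Omega> H)"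
    by (rule measurable_sets)
  moreover have "Y -` B \<inter> space (optional_measure \<Omega> H) = {p\<in>{0..} \<times> \<Omega>. Y p \<in> B}"
    by (auto simp: opt_space)
  ultimately show ?thesis by (simp add: opt_sets)
qed

lemma ndiv_meas[measurable (raw)]:
  "f \<in> borel_measurable N \<Longrightarrow> g \<in> borel_measurable N \<Longrightarrow> (\<lambda>x. ndiv (f x) (g x)) \<in> borel_measurable N"
  unfolding ndiv_def by (rule measurable_If) (auto intro: borel_measurable_le)

locale setting =
  fixes M :: "'a measure" and F :: "real \<Rightarrow> 'a set set" and \<tau> :: "'a \<Rightarrow> ennreal"
  assumes filt: "usual_filtration M F"
    and tau_meas: "\<tau> \<in> borel_measurable M"
begin

abbreviation "\<Omega> \<equiv> space M"
abbreviation "G \<equiv> Gfilt M F \<tau>"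
abbreviation "SS \<equiv> sigma_sets (space M) (sigma_fun (space M) \<tau> \<union> Finf (space M) F)"
abbreviation "NN \<equiv> Nsig M F \<tau>"
abbreviation "Gi t \<equiv> (\<Inter>s\<in>{t<..}. sigma_sets (space M)
          (F s \<union> sigma_fun (space M) (\<lambda>\<omega>. min (\<tau> \<omega>) (ennreal s))))"
abbreviation "NG \<equiv> {D. D \<subseteq> space M \<and> (\<exists>E\<in>SS. E \<in> sets M \<and> emeasure M E = 0 \<and> D \<subseteq> E)}"
definition "Gm t = measure_of (space M) (G t) (\<lambda>_. 0)"
abbreviation "GF \<equiv> Finf (space M) G"

lemma filt1: "\<forall>t\<ge>0. sigma_algebra \<Omega> (F t) \<and> F t \<subseteq> sets M"
  using filt[unfolded usual_filtration_def] by (rule conjunct1)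
lemma filt2: "\<forall>s t. 0 \<le> s \<longrightarrow> s \<le> t \<longrightarrow> F s \<subseteq> F t"
  using filt[unfolded usual_filtration_def] by (rule conjunct1[OF conjunct2])
lemma F_sa: "t \<ge> 0 \<Longrightarrow> sigma_algebra \<Omega> (F t)"
  using filt1 by blast
lemma F_sets: "t \<ge> 0 \<Longrightarrow> F t \<subseteq> sets M"
  using filt1 by blast
lemma F_Pow: "t \<ge> 0 \<Longrightarrow> F t \<subseteq> Pow \<Omega>"
  using F_sets sets.sets_into_space by blast
lemma F_mono: "0 \<le> s \<Longrightarrow> s \<le> t \<Longrightarrow> F s \<subseteq> F t"
  using filt2 by blast

lemma sigma_fun_Pow: "sigma_fun \<Omega> f \<subseteq> Pow \<Omega>"
  unfolding sigma_fun_def by (rule, rule PowI, rule sigma_sets_into_sp[rotated]) auto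

lemma sigma_fun_gen: "B \<in> sets borel \<Longrightarrow> {\<omega>\<in>\<Omega>. f \<omega> \<in> B} \<in> sigma_fun \<Omega> f"
proof -
  assume "B \<in> sets borel"
  then have "f -` B \<inter> \<Omega> \<in> sigma_fun \<Omega> f" unfolding sigma_fun_def by (intro sigma_sets.Basic) blast
  moreover have "f -` B \<inter> \<Omega> = {\<omega>\<in>\<Omega>. f \<omega> \<in> B}" by auto
  ultimately show ?thesis by simp
qed

lemma sigma_fun_tau_sets: "sigma_fun \<Omega> \<tau> \<subseteq> sets M"
  unfolding sigma_fun_def
  by (rule sets.sigma_sets_subset) (use tau_meas in \<open>auto simp: measurable_sets\<close>)

lemma Finf_F_sets: "Finf \<Omega> F \<subseteq> sets M"
  unfolding Finf_def
  by (rule sets.sigma_sets_subset) (use F_sets in auto)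

lemma SS_sets: "SS \<subseteq> sets M"
  by (rule sets.sigma_sets_subset) (use sigma_fun_tau_sets Finf_F_sets in auto)

lemma SS_Pow: "SS \<subseteq> Pow \<Omega>"
  using SS_sets sets.sets_into_space by blast

lemma NN_def': "NN = sigma_sets \<Omega> NG"
  unfolding Nsig_def null_sigma_def by simp

lemma NG_Pow: "NG \<subseteq> Pow \<Omega>" by auto

lemma NN_Pow: "NN \<subseteq> Pow \<Omega>"
  unfolding NN_def' by (rule, rule PowI, rule sigma_sets_into_sp[OF NG_Pow])

lemma Gi_Pow: "t \<ge> 0 \<Longrightarrow> Gi t \<subseteq> Pow \<Omega>"
proof -
  assume t: "t \<ge> 0"
  have "Gi t \<subseteq> sigma_sets \<Omega> (F (t+1) \<union> sigma_fun \<Omega> (\<lambda>\<omega>. min (\<tau> \<omega>) (ennreal (t+1))))"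
    by (rule INT_lower) simp
  also have "\<dots> \<subseteq> Pow \<Omega>"
    by (rule, rule PowI, rule sigma_sets_into_sp[rotated], assumption)
       (use F_Pow[of "t+1"] t sigma_fun_Pow in auto)
  finally show ?thesis .
qed

lemma G_def': "G t = sigma_sets \<Omega> (NN \<union> Gi t)"
  unfolding Gfilt_def by simp

lemma G_gen_Pow: "t \<ge> 0 \<Longrightarrow> NN \<union> Gi t \<subseteq> Pow \<Omega>"
  using NN_Pow Gi_Pow by auto

lemma G_sa: "t \<ge> 0 \<Longrightarrow> sigma_algebra \<Omega> (G t)"
  unfolding G_def' by (rule sigma_algebra_sigma_sets[OF G_gen_Pow])

lemma G_Pow: "t \<ge> 0 \<Longrightarrow> G t \<subseteq> Pow \<Omega>"
  using G_sa sa_Pow by blast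

lemma NN_G: "NN \<subseteq> G t"
  unfolding G_def' by auto

lemma Gi_G: "Gi t \<subseteq> G t"
  unfolding G_def' by blast

lemma G_mono: "s \<le> t \<Longrightarrow> G s \<subseteq> G t"
  unfolding G_def' by (rule sigma_sets_mono') auto

lemma F_G: "t \<ge> 0 \<Longrightarrow> F t \<subseteq> G t"
proof -
  assume t: "t \<ge> 0"
  have "F t \<subseteq> Gi t"
  proof
    fix A assume "A \<in> F t"
    show "A \<in> Gi t"
    proof
      fix s assume "s \<in> {t<..}"
      then have "F t \<subseteq> F s" using F_mono t by auto
      with \<open>A \<in> F t\<close> show "A \<in> sigma_sets \<Omega> (F s \<union> sigma_fun \<Omega> (\<lambda>\<omega>. min (\<tau> \<omega>) (ennreal s)))"
        by blast
    qed
  qed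
  then show ?thesis using Gi_G by blast
qed

lemma tau_stop: "t \<ge> 0 \<Longrightarrow> {\<omega>\<in>\<Omega>. \<tau> \<omega> \<le> ennreal t} \<in> G t"
proof -
  assume t: "t \<ge> 0"
  have "{\<omega>\<in>\<Omega>. \<tau> \<omega> \<le> ennreal t} \<in> Gi t"
  proof
    fix s assume s: "s \<in> {t<..}"
    have eq: "{\<omega>\<in>\<Omega>. \<tau> \<omega> \<le> ennreal t} = {\<omega>\<in>\<Omega>. min (\<tau> \<omega>) (ennreal s) \<in> {..ennreal t}}"
    proof -
      have "ennreal t < ennreal s" using s t by (simp add: ennreal_less_iff)
      then show ?thesis by (auto simp: min_le_iff_disj)
    qed
    have "{\<omega>\<in>\<Omega>. min (\<tau> \<omega>) (ennreal s) \<in> {..ennreal t}} \<in> sigma_fun \<Omega> (\<lambda>\<omega>. min (\<tau> \<omega>) (ennreal s))"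
      by (rule sigma_fun_gen) auto
    then show "{\<omega>\<in>\<Omega>. \<tau> \<omega> \<le> ennreal t} \<in> sigma_sets \<Omega> (F s \<union> sigma_fun \<Omega> (\<lambda>\<omega>. min (\<tau> \<omega>) (ennreal s)))"
      unfolding eq by blast
  qed
  then show ?thesis using Gi_G by blast
qed

lemma Gm_space[simp]: "space (Gm t) = \<Omega>"
  unfolding Gm_def by (simp add: space_measure_of_conv)

lemma Gm_sets[simp]: "t \<ge> 0 \<Longrightarrow> sets (Gm t) = G t"
  unfolding Gm_def by (rule sigma_algebra.sets_measure_of_eq[OF G_sa])

lemma G_GF: "t \<ge> 0 \<Longrightarrow> G t \<subseteq> GF"
  unfolding Finf_def by (auto intro: sigma_sets.Basic)

lemma GF_Pow: "(\<Union>t\<in>{0..}. G t) \<subseteq> Pow \<Omega>"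
  using G_Pow by auto

lemma GF_sa: "sigma_algebra \<Omega> GF"
  unfolding Finf_def by (rule sigma_algebra_sigma_sets[OF GF_Pow])


abbreviation "stp T \<equiv> stopping_time_wrt (space M) (Gfilt M F \<tau>) T"
abbreviation "GR T \<equiv> stopped_sigma (space M) (Gfilt M F \<tau>) T"

lemma stop_le: "stp T \<Longrightarrow> t \<ge> 0 \<Longrightarrow> {\<omega>\<in>\<Omega>. T \<omega> \<le> ennreal t} \<in> G t"
  unfolding stopping_time_wrt_def by auto

lemma tau_stp: "stp \<tau>"
  unfolding stopping_time_wrt_def using tau_stop by auto

lemma G_top: "t \<ge> 0 \<Longrightarrow> \<Omega> \<in> G t" using sa_top G_sa by blast

lemma stop_min_meas:
  assumes T: "stp T" and t: "t \<ge> 0"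
  shows "(\<lambda>\<omega>. min (T \<omega>) (ennreal t)) \<in> borel_measurable (Gm t)"
proof (rule borel_measurableI_le)
  fix y :: ennreal
  show "{\<omega> \<in> space (Gm t). min (T \<omega>) (ennreal t) \<le> y} \<in> sets (Gm t)"
  proof (cases "ennreal t \<le> y")
    case True
    then have "{\<omega> \<in> space (Gm t). min (T \<omega>) (ennreal t) \<le> y} = \<Omega>" by (auto simp: min_le_iff_disj)
    then show ?thesis using G_top t by simp
  next
    case False
    then have yl: "y < ennreal t" by simp
    then have "y < top" using ennreal_less_top order.strict_trans by blast
    then obtain a where a: "y = ennreal a" "0 \<le> a" by (cases y rule: ennreal_cases) auto
    have "a < t" using yl a t by (simp add: ennreal_less_iff)
    have eq: "{\<omega> \<in> space (Gm t). min (T \<omega>) (ennreal t) \<le> y} = {\<omega>\<in>\<Omega>. T \<omega> \<le> ennreal a}"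
      using False a by (auto simp: min_le_iff_disj)
    have "{\<omega>\<in>\<Omega>. T \<omega> \<le> ennreal a} \<in> G a" using T a(2) stop_le by blast
    also have "G a \<subseteq> G t" using G_mono \<open>a<t\<close> by simp
    finally show ?thesis using eq t by simp
  qed
qed

lemma stop_s_meas:
  assumes T: "stp T" and t: "t \<ge> 0"
  shows "(\<lambda>\<omega>. enn2real (min (T \<omega>) (ennreal t))) \<in> borel_measurable (Gm t)"
proof -
  have [measurable]: "(\<lambda>\<omega>. min (T \<omega>) (ennreal t)) \<in> borel_measurable (Gm t)"
    by (rule stop_min_meas[OF assms])
  show ?thesis by measurable
qed

lemma stop_ndiv_meas:
  assumes T: "stp T" and t: "t \<ge> 0"
  shows "(\<lambda>\<omega>. ndiv (T \<omega>) (ennreal t)) \<in> borel_measurable (Gm t)"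
proof (rule borel_measurableI_le)
  fix y :: ennreal
  show "{\<omega> \<in> space (Gm t). ndiv (T \<omega>) (ennreal t) \<le> y} \<in> sets (Gm t)"
  proof (cases "y = top")
    case True
    then have "{\<omega> \<in> space (Gm t). ndiv (T \<omega>) (ennreal t) \<le> y} = \<Omega>" by auto
    then show ?thesis using G_top t by simp
  next
    case False
    then obtain a where a: "y = ennreal a" "0 \<le> a" by (cases y rule: ennreal_cases) auto
    have eq: "{\<omega> \<in> space (Gm t). ndiv (T \<omega>) (ennreal t) \<le> y} = {\<omega>\<in>\<Omega>. T \<omega> \<le> ennreal (min a t)}"
    proof -
      have "ennreal (min a t) = min (ennreal a) (ennreal t)"
        using a t by (cases "a \<le> t") (auto simp: min_def ennreal_le_iff)
      then show ?thesis using a by (auto simp: ndiv_def top_unique)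
    qed
    have "{\<omega>\<in>\<Omega>. T \<omega> \<le> ennreal (min a t)} \<in> G (min a t)" using T a(2) t stop_le by simp
    also have "G (min a t) \<subseteq> G t" using G_mono by simp
    finally show ?thesis using eq t by simp
  qed
qed

lemma s_bounds: "t \<ge> 0 \<Longrightarrow> 0 \<le> enn2real (min x (ennreal t)) \<and> enn2real (min x (ennreal t)) \<le> t"
proof -
  assume t: "t \<ge> 0"
  have "enn2real (min x (ennreal t)) \<le> enn2real (ennreal t)"
    by (rule enn2real_mono) auto
  then show ?thesis using t by simp
qed

lemma adapted_meas:
  assumes X: "cadlag_adapted \<Omega> G X" and c: "0 \<le> c" "c \<le> t"
  shows "(\<lambda>\<omega>. X (c, \<omega>)) \<in> borel_measurable (Gm t)"
proof (rule measurableI)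
  fix A :: "real set" assume A: "A \<in> sets borel"
  then have "{\<omega>\<in>\<Omega>. X (c,\<omega>) \<in> A} \<in> G c" using X c unfolding cadlag_adapted_def by auto
  moreover have "G c \<subseteq> G t" using G_mono c by simp
  moreover have "(\<lambda>\<omega>. X (c, \<omega>)) -` A \<inter> space (Gm t) = {\<omega>\<in>\<Omega>. X (c,\<omega>) \<in> A}" by auto
  ultimately show "(\<lambda>\<omega>. X (c, \<omega>)) -` A \<inter> space (Gm t) \<in> sets (Gm t)" using c by auto
qed auto

lemma K:
  assumes X: "cadlag_adapted \<Omega> G X" and T: "stp T" and t: "t \<ge> 0"
  shows "(\<lambda>\<omega>. X (enn2real (min (T \<omega>) (ennreal t)), \<omega>)) \<in> borel_measurable (Gm t)"
proof -
  define s where "s \<omega> = enn2real (min (T \<omega>) (ennreal t))" for \<omega>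
  have sm[measurable]: "s \<in> borel_measurable (Gm t)" unfolding s_def by (rule stop_s_meas[OF T t])
  have sb: "0 \<le> s \<omega>" "s \<omega> \<le> t" for \<omega> using s_bounds[OF t] unfolding s_def by auto
  define c where "c n k = max 0 (min t (real_of_int k / 2^n))" for n :: nat and k :: int
  define k where "k n \<omega> = \<lceil>2^n * s \<omega>\<rceil>" for n :: nat and \<omega>
  have c01: "0 \<le> c n i" "c n i \<le> t" for n i unfolding c_def using t by auto
  have Xc: "(\<lambda>\<omega>. X (c n i, \<omega>)) \<in> borel_measurable (Gm t)" for n i
    by (rule adapted_meas[OF X c01])
  have km: "k n \<in> Gm t \<rightarrow>\<^sub>M count_space UNIV" for n
  proof (subst measurable_count_space_eq2_countable, safe)
    fix a :: int
    have "k n -` {a} \<inter> space (Gm t) = (\<lambda>\<omega>. 2^n * s \<omega>) -` {real_of_int a - 1 <.. real_of_int a} \<inter> space (Gm t)"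
      unfolding k_def by (auto simp: ceiling_eq_iff ceil_lt)
    also have "\<dots> \<in> sets (Gm t)"
    proof (rule measurable_sets)
      show "(\<lambda>\<omega>. 2^n * s \<omega>) \<in> borel_measurable (Gm t)" by measurable
      show "{real_of_int a - 1 <.. real_of_int a} \<in> sets borel" by simp
    qed
    finally show "k n -` {a} \<inter> space (Gm t) \<in> sets (Gm t)" .
  qed auto
  have fm: "(\<lambda>\<omega>. X (c n (k n \<omega>), \<omega>)) \<in> borel_measurable (Gm t)" for n
    by (rule measurable_compose_countable[where f="\<lambda>i \<omega>. X (c n i, \<omega>)", OF Xc km])
  have conv: "(\<lambda>n. X (c n (k n \<omega>), \<omega>)) \<longlonglongrightarrow> X (s \<omega>, \<omega>)" if \<omega>': "\<omega> \<in> space (Gm t)" for \<omega>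
  proof -
    have \<omega>: "\<omega> \<in> \<Omega>" using \<omega>' by simp
    have bnd: "s \<omega> \<le> c n (k n \<omega>) \<and> c n (k n \<omega>) \<le> s \<omega> + 1/2^n" for n
    proof -
      have p: "(0::real) < 2^n" by simp
      have "2^n * s \<omega> \<le> real_of_int (k n \<omega>)" "real_of_int (k n \<omega>) \<le> 2^n * s \<omega> + 1"
        unfolding k_def by (simp_all add: le_of_int_ceiling of_int_ceiling_le_add_one)
      then have q: "s \<omega> \<le> real_of_int (k n \<omega>) / 2^n" "real_of_int (k n \<omega>) / 2^n \<le> s \<omega> + 1/2^n"
        using p by (simp_all add: field_simps)
      show ?thesis unfolding c_def using sb[of \<omega>] q by (auto simp: max_def min_def)
    qed
    have rc: "((\<lambda>u. X (u, \<omega>)) \<longlongrightarrow> X (s \<omega>, \<omega>)) (at_right (s \<omega>))"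
      using X \<omega> sb unfolding cadlag_adapted_def by auto
    show ?thesis
    proof (rule tendstoI)
      fix e :: real assume e: "e > 0"
      from tendstoD[OF rc e] obtain b where b: "b > s \<omega>"
        "\<And>y. y > s \<omega> \<Longrightarrow> y < b \<Longrightarrow> dist (X (y, \<omega>)) (X (s \<omega>, \<omega>)) < e"
        unfolding eventually_at_right_field by blast
      obtain n0 where n0: "(1/2::real)^n0 < b - s \<omega>" using real_arch_pow_inv[of "b - s \<omega>" "1/2"] b by auto
      show "\<forall>\<^sub>F n in sequentially. dist (X (c n (k n \<omega>), \<omega>)) (X (s \<omega>, \<omega>)) < e"
      proof (rule eventually_sequentiallyI[of n0])
        fix n assume "n0 \<le> n"
        then have "(1/2::real)^n \<le> (1/2)^n0" by (rule power_decreasing) auto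
        then have "1/2^n < b - s \<omega>" using n0 by (simp add: power_one_over)
        then have lb: "c n (k n \<omega>) < b" using bnd[of n] by linarith
        show "dist (X (c n (k n \<omega>), \<omega>)) (X (s \<omega>, \<omega>)) < e"
        proof (cases "c n (k n \<omega>) = s \<omega>")
          case True then show ?thesis using e by simp
        next
          case False then have "c n (k n \<omega>) > s \<omega>" using bnd[of n] by simp
          then show ?thesis using b(2) lb by blast
        qed
      qed
    qed
  qed
  show ?thesis
    using borel_measurable_LIMSEQ_metric[OF fm conv] unfolding s_def by simp
qed

lemma K_set:
  assumes X: "cadlag_adapted \<Omega> G X" and T: "stp T" and t: "t \<ge> 0" and B: "B \<in> sets borel"
  shows "{\<omega>\<in>\<Omega>. X (enn2real (min (T \<omega>) (ennreal t)), \<omega>) \<in> B} \<in> G t"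
proof -
  have "(\<lambda>\<omega>. X (enn2real (min (T \<omega>) (ennreal t)), \<omega>)) -` B \<inter> space (Gm t) \<in> sets (Gm t)"
    by (rule measurable_sets[OF K[OF X T t] B])
  moreover have "(\<lambda>\<omega>. X (enn2real (min (T \<omega>) (ennreal t)), \<omega>)) -` B \<inter> space (Gm t)
     = {\<omega>\<in>\<Omega>. X (enn2real (min (T \<omega>) (ennreal t)), \<omega>) \<in> B}" by auto
  ultimately show ?thesis using t by simp
qed

lemma GR_sa: assumes T: "stp T" shows "sigma_algebra \<Omega> (GR T)"
  unfolding sigma_algebra_iff2
proof (intro conjI allI impI ballI)
  show "GR T \<subseteq> Pow \<Omega>" unfolding stopped_sigma_def using sa_Pow[OF GF_sa] by auto
  show "{} \<in> GR T" unfolding stopped_sigma_def using sa_empty[OF GF_sa] sa_empty[OF G_sa] by auto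
next
  fix s assume s: "s \<in> GR T"
  show "\<Omega> - s \<in> GR T" unfolding stopped_sigma_def
  proof (intro CollectI conjI allI impI)
    show "\<Omega> - s \<in> GF" using s sa_compl[OF GF_sa] unfolding stopped_sigma_def by auto
    fix t :: real assume t: "t \<ge> 0"
    have "(\<Omega> - s) \<inter> {\<omega>\<in>\<Omega>. T \<omega> \<le> ennreal t} = {\<omega>\<in>\<Omega>. T \<omega> \<le> ennreal t} - (s \<inter> {\<omega>\<in>\<Omega>. T \<omega> \<le> ennreal t})"
      by auto
    also have "\<dots> \<in> G t" using sa_Diff[OF G_sa[OF t]] stop_le[OF T t] s t unfolding stopped_sigma_def by auto
    finally show "(\<Omega> - s) \<inter> {\<omega>\<in>\<Omega>. T \<omega> \<le> ennreal t} \<in> G t" .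
  qed
next
  fix A :: "nat \<Rightarrow> 'a set" assume A: "range A \<subseteq> GR T"
  show "\<Union> (range A) \<in> GR T" unfolding stopped_sigma_def
  proof (intro CollectI conjI allI impI)
    show "\<Union> (range A) \<in> GF" using A sa_UN[OF GF_sa, of A] unfolding stopped_sigma_def by auto
    fix t :: real assume t: "t \<ge> 0"
    have *: "\<And>i. A i \<inter> {\<omega>\<in>\<Omega>. T \<omega> \<le> ennreal t} \<in> G t" using A t unfolding stopped_sigma_def by auto
    have "\<Union> (range A) \<inter> {\<omega>\<in>\<Omega>. T \<omega> \<le> ennreal t} = (\<Union>i. A i \<inter> {\<omega>\<in>\<Omega>. T \<omega> \<le> ennreal t})" by auto
    also have "\<dots> \<in> G t" using * by (rule sa_UN[OF G_sa[OF t]])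
    finally show "\<Union> (range A) \<inter> {\<omega>\<in>\<Omega>. T \<omega> \<le> ennreal t} \<in> G t" .
  qed
qed

lemma GR_intro:
  assumes T: "stp T" and A: "A \<subseteq> {\<omega>\<in>\<Omega>. T \<omega> < \<infinity>}"
    and At: "\<And>t. t \<ge> 0 \<Longrightarrow> A \<inter> {\<omega>\<in>\<Omega>. T \<omega> \<le> ennreal t} \<in> G t"
  shows "A \<in> GR T"
  unfolding stopped_sigma_def
proof (intro CollectI conjI allI impI At)
  have eq: "A = (\<Union>n. A \<inter> {\<omega>\<in>\<Omega>. T \<omega> \<le> ennreal (real n)})"
  proof (intro equalityI subsetI)
    fix \<omega> assume w: "\<omega> \<in> A"
    then have "T \<omega> < \<infinity>" "\<omega> \<in> \<Omega>" using A by auto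
    then obtain r where r: "T \<omega> = ennreal r" "0 \<le> r" by (cases "T \<omega>" rule: ennreal_cases) auto
    obtain n where "r \<le> real n" using real_arch_simple by blast
    then have "T \<omega> \<le> ennreal (real n)" using r by simp
    then show "\<omega> \<in> (\<Union>n. A \<inter> {\<omega>\<in>\<Omega>. T \<omega> \<le> ennreal (real n)})" using w \<open>\<omega> \<in> \<Omega>\<close> by blast
  qed auto
  have "A \<inter> {\<omega>\<in>\<Omega>. T \<omega> \<le> ennreal (real n)} \<in> GF" for n
    using At[of "real n"] G_GF[of "real n"] by auto
  then have "(\<Union>n. A \<inter> {\<omega>\<in>\<Omega>. T \<omega> \<le> ennreal (real n)}) \<in> GF" by (rule sa_UN[OF GF_sa])
  then show "A \<in> GF" using eq by simp
qed

lemma U_GR: assumes T: "stp T" shows "{\<omega>\<in>\<Omega>. T \<omega> < \<infinity>} \<in> GR T"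
proof (rule GR_intro[OF T])
  fix t :: real assume t: "t \<ge> 0"
  have "{\<omega>\<in>\<Omega>. T \<omega> < \<infinity>} \<inter> {\<omega>\<in>\<Omega>. T \<omega> \<le> ennreal t} = {\<omega>\<in>\<Omega>. T \<omega> \<le> ennreal t}"
    using ennreal_less_top le_less_trans by auto
  then show "{\<omega>\<in>\<Omega>. T \<omega> < \<infinity>} \<inter> {\<omega>\<in>\<Omega>. T \<omega> \<le> ennreal t} \<in> G t" using stop_le[OF T t] by simp
qed auto

lemma H1:
  assumes X: "cadlag_adapted \<Omega> G X" and T: "stp T" and B: "B \<in> sets borel"
  shows "{\<omega>\<in>\<Omega>. T \<omega> < \<infinity> \<and> X (enn2real (T \<omega>), \<omega>) \<in> B} \<in> GR T"
proof (rule GR_intro[OF T])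
  fix t :: real assume t: "t \<ge> 0"
  have "{\<omega>\<in>\<Omega>. T \<omega> < \<infinity> \<and> X (enn2real (T \<omega>), \<omega>) \<in> B} \<inter> {\<omega>\<in>\<Omega>. T \<omega> \<le> ennreal t}
      = {\<omega>\<in>\<Omega>. T \<omega> \<le> ennreal t} \<inter> {\<omega>\<in>\<Omega>. X (enn2real (min (T \<omega>) (ennreal t)), \<omega>) \<in> B}"
    using ennreal_less_top le_less_trans by (auto simp: min_absorb1)
  also have "\<dots> \<in> G t" by (rule sa_Int[OF G_sa[OF t] stop_le[OF T t] K_set[OF X T t B]])
  finally show "{\<omega>\<in>\<Omega>. T \<omega> < \<infinity> \<and> X (enn2real (T \<omega>), \<omega>) \<in> B} \<inter> {\<omega>\<in>\<Omega>. T \<omega> \<le> ennreal t} \<in> G t" .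
qed auto

lemma H2:
  assumes T: "stp T" and A: "A \<in> optional_sets \<Omega> G"
  shows "{\<omega>\<in>\<Omega>. T \<omega> < \<infinity> \<and> (enn2real (T \<omega>), \<omega>) \<in> A} \<in> GR T"
  using A unfolding optional_sets_def
proof (induction rule: sigma_sets.induct)
  case (Basic a)
  then obtain X B where XB: "a = {p \<in> {0..} \<times> \<Omega>. X p \<in> B}" "cadlag_adapted \<Omega> G X" "B \<in> sets borel"
    by blast
  have "{\<omega>\<in>\<Omega>. T \<omega> < \<infinity> \<and> (enn2real (T \<omega>), \<omega>) \<in> a} = {\<omega>\<in>\<Omega>. T \<omega> < \<infinity> \<and> X (enn2real (T \<omega>), \<omega>) \<in> B}"
    using XB(1) by auto
  then show ?case using H1[OF XB(2) T XB(3)] by simp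
next
  case Empty
  then show ?case using sa_empty[OF GR_sa[OF T]] by simp
next
  case (Compl a)
  have "{\<omega>\<in>\<Omega>. T \<omega> < \<infinity> \<and> (enn2real (T \<omega>), \<omega>) \<in> {0..} \<times> \<Omega> - a}
     = {\<omega>\<in>\<Omega>. T \<omega> < \<infinity>} - {\<omega>\<in>\<Omega>. T \<omega> < \<infinity> \<and> (enn2real (T \<omega>), \<omega>) \<in> a}" by auto
  then show ?case using sa_Diff[OF GR_sa[OF T] U_GR[OF T] Compl.IH] by simp
next
  case (Union a)
  have "{\<omega>\<in>\<Omega>. T \<omega> < \<infinity> \<and> (enn2real (T \<omega>), \<omega>) \<in> \<Union> (range a)}
      = (\<Union>i. {\<omega>\<in>\<Omega>. T \<omega> < \<infinity> \<and> (enn2real (T \<omega>), \<omega>) \<in> a i})" by auto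
  then show ?case using sa_UN[OF GR_sa[OF T], OF Union.IH] by simp
qed

lemma H3:
  assumes T: "stp T" and Y: "Y \<in> borel_measurable (optional_measure \<Omega> G)" and B: "B \<in> sets borel"
  shows "{\<omega>\<in>\<Omega>. T \<omega> < \<infinity> \<and> Y (enn2real (T \<omega>), \<omega>) \<in> B} \<in> GR T"
proof -
  have "{\<omega>\<in>\<Omega>. T \<omega> < \<infinity> \<and> Y (enn2real (T \<omega>), \<omega>) \<in> B}
     = {\<omega>\<in>\<Omega>. T \<omega> < \<infinity> \<and> (enn2real (T \<omega>), \<omega>) \<in> {p\<in>{0..} \<times> \<Omega>. Y p \<in> B}}" by auto
  then show ?thesis using H2[OF T opt_preimage[OF Y B]] by simp
qed


definition IP :: "('a \<Rightarrow> ennreal) \<Rightarrow> real \<times> 'a \<Rightarrow> real" where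
  "IP T p = (if T (snd p) \<le> ennreal (fst p) then 1 else 0)"

definition X2 :: "('a \<Rightarrow> ennreal) \<Rightarrow> real \<times> 'a \<Rightarrow> real" where
  "X2 T p = (if T (snd p) = top then 0 else max 0 (fst p - enn2real (T (snd p))))"

lemma IP_cadlag: assumes T: "stp T" shows "cadlag_adapted \<Omega> G (IP T)"
  unfolding cadlag_adapted_def
proof (intro conjI allI impI ballI)
  fix t :: real and B :: "real set" assume t: "t \<ge> 0" and B: "B \<in> sets borel"
  have eq: "{\<omega>\<in>\<Omega>. IP T (t, \<omega>) \<in> B} =
     (if 1 \<in> B then {\<omega>\<in>\<Omega>. T \<omega> \<le> ennreal t} else {}) \<union> (if 0 \<in> B then \<Omega> - {\<omega>\<in>\<Omega>. T \<omega> \<le> ennreal t} else {})"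
    by (auto simp: IP_def)
  show "{\<omega>\<in>\<Omega>. IP T (t, \<omega>) \<in> B} \<in> G t"
    unfolding eq using stop_le[OF T t] sa_empty[OF G_sa[OF t]] sa_compl[OF G_sa[OF t]] sa_Un[OF G_sa[OF t]]
    by auto
next
  fix \<omega> t assume w: "\<omega> \<in> \<Omega>" and t: "(t::real) \<ge> 0"
  show "((\<lambda>s. IP T (s, \<omega>)) \<longlongrightarrow> IP T (t, \<omega>)) (at_right t)"
  proof (cases "T \<omega> \<le> ennreal t")
    case True
    have "\<forall>\<^sub>F s in at_right t. IP T (s, \<omega>) = IP T (t, \<omega>)"
    proof (rule eventually_at_rightI[where b="t+1"])
      fix s assume "s \<in> {t<..<t+1}"
      then have "ennreal t \<le> ennreal s" by (auto intro: ennreal_leI)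
      then show "IP T (s, \<omega>) = IP T (t, \<omega>)" using True by (auto simp: IP_def)
    qed simp
    then show ?thesis by (rule tendsto_eventually)
  next
    case False
    obtain b where b: "b > t" "ennreal b \<le> T \<omega>"
    proof (cases "T \<omega>" rule: ennreal_cases)
      case (real r)
      then have "t < r" using False t by (simp add: ennreal_le_iff)
      then show ?thesis using that real by auto
    next
      case top then show ?thesis using that[of "t+1"] by simp
    qed
    have "\<forall>\<^sub>F s in at_right t. IP T (s, \<omega>) = IP T (t, \<omega>)"
    proof (rule eventually_at_rightI[where b=b])
      fix s assume s: "s \<in> {t<..<b}"
      then have "ennreal s < ennreal b" using t by (auto simp: ennreal_less_iff)
      then have "\<not> T \<omega> \<le> ennreal s" using b by (meson leD order.trans less_le_not_le)
      then show "IP T (s, \<omega>) = IP T (t, \<omega>)" using False by (auto simp: IP_def)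
    qed (use b in simp)
    then show ?thesis by (rule tendsto_eventually)
  qed
  assume t0: "0 < t"
  show "\<exists>l. ((\<lambda>s. IP T (s, \<omega>)) \<longlongrightarrow> l) (at_left t)"
  proof (cases "T \<omega> < ennreal t")
    case True
    then obtain r where r: "T \<omega> = ennreal r" "0 \<le> r" by (cases "T \<omega>" rule: ennreal_cases) auto
    then have "r < t" using True t by (simp add: ennreal_less_iff)
    have "\<forall>\<^sub>F s in at_left t. IP T (s, \<omega>) = 1"
    proof (rule eventually_at_leftI[of r])
      fix s assume s: "s \<in> {r<..<t}"
      then have "ennreal r \<le> ennreal s" by (auto intro: ennreal_leI)
      then show "IP T (s, \<omega>) = 1" using r by (auto simp: IP_def)
    qed (use \<open>r < t\<close> in simp)
    then show ?thesis by (blast intro: tendsto_eventually)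
  next
    case False
    have "\<forall>\<^sub>F s in at_left t. IP T (s, \<omega>) = 0"
    proof (rule eventually_at_leftI[of "t - 1"])
      fix s assume s: "s \<in> {t - 1<..<t}"
      then have "ennreal s < ennreal t" using t0 by (auto intro: ennreal_lessI)
      then have "\<not> T \<omega> \<le> ennreal s" using False by (meson leD order.trans less_le_not_le)
      then show "IP T (s, \<omega>) = 0" by (auto simp: IP_def)
    qed simp
    then show ?thesis by (blast intro: tendsto_eventually)
  qed
qed

lemma X2_cont: "((\<lambda>s. X2 T (s, \<omega>)) \<longlongrightarrow> X2 T (t, \<omega>)) (at t within A)"
proof (cases "T \<omega> = top")
  case True then show ?thesis by (simp add: X2_def)
next
  case False
  have "((\<lambda>s. max 0 (s - enn2real (T \<omega>))) \<longlongrightarrow> max 0 (t - enn2real (T \<omega>))) (at t within A)"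
    by (intro tendsto_intros)
  then show ?thesis using False by (simp add: X2_def)
qed

lemma X2_cadlag: assumes T: "stp T" shows "cadlag_adapted \<Omega> G (X2 T)"
  unfolding cadlag_adapted_def
proof (intro conjI allI impI ballI)
  fix t :: real and B :: "real set" assume t: "t \<ge> 0" and B: "B \<in> sets borel"
  have eq: "X2 T (t, \<omega>) = t - enn2real (min (T \<omega>) (ennreal t))" for \<omega>
  proof (cases "T \<omega>" rule: ennreal_cases)
    case (real r)
    have "min (ennreal r) (ennreal t) = ennreal (min r t)"
      using real t by (cases "r \<le> t") (auto simp: min_def ennreal_le_iff)
    then show ?thesis using real t by (auto simp: X2_def max_def min_def)
  next
    case top then show ?thesis using t by (simp add: X2_def)
  qed
  have [measurable]: "(\<lambda>\<omega>. enn2real (min (T \<omega>) (ennreal t))) \<in> borel_measurable (Gm t)"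
    by (rule stop_s_meas[OF T t])
  have "(\<lambda>\<omega>. t - enn2real (min (T \<omega>) (ennreal t))) -` B \<inter> space (Gm t) \<in> sets (Gm t)"
    by (rule measurable_sets[OF _ B]) measurable
  moreover have "(\<lambda>\<omega>. t - enn2real (min (T \<omega>) (ennreal t))) -` B \<inter> space (Gm t) = {\<omega>\<in>\<Omega>. X2 T (t, \<omega>) \<in> B}"
    using eq by auto
  ultimately show "{\<omega>\<in>\<Omega>. X2 T (t, \<omega>) \<in> B} \<in> G t" using t by simp
next
  fix \<omega> t show "((\<lambda>s. X2 T (s, \<omega>)) \<longlongrightarrow> X2 T (t, \<omega>)) (at_right t)" by (rule X2_cont)
  show "\<exists>l. ((\<lambda>s. X2 T (s, \<omega>)) \<longlongrightarrow> l) (at_left t)" using X2_cont by blast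
qed

lemma graph_opt: assumes R: "stp R" shows "graph_rt \<Omega> R \<in> optional_sets \<Omega> G"
proof -
  have eq: "graph_rt \<Omega> R = {p\<in>{0..} \<times> \<Omega>. IP R p \<in> {1}} \<inter> {p\<in>{0..} \<times> \<Omega>. X2 R p \<in> {0}}"
  proof (intro equalityI subsetI)
    fix p assume "p \<in> graph_rt \<Omega> R"
    then obtain t \<omega> where p: "p = (t, \<omega>)" "0 \<le> t" "\<omega> \<in> \<Omega>" "R \<omega> = ennreal t"
      unfolding graph_rt_def by auto
    then show "p \<in> {p\<in>{0..} \<times> \<Omega>. IP R p \<in> {1}} \<inter> {p\<in>{0..} \<times> \<Omega>. X2 R p \<in> {0}}"
      by (auto simp: IP_def X2_def)
  next
    fix p assume p: "p \<in> {p\<in>{0..} \<times> \<Omega>. IP R p \<in> {1}} \<inter> {p\<in>{0..} \<times> \<Omega>. X2 R p \<in> {0}}"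
    obtain t \<omega> where tw: "p = (t, \<omega>)" by (cases p)
    have t: "0 \<le> t" "\<omega> \<in> \<Omega>" "R \<omega> \<le> ennreal t" using p tw by (auto simp: IP_def split: if_splits)
    then have "R \<omega> \<noteq> top" using ennreal_less_top top.not_eq_extremum by (metis leD)
    then obtain r where r: "R \<omega> = ennreal r" "0 \<le> r" by (cases "R \<omega>" rule: ennreal_cases) auto
    have "r \<le> t" using t r by (simp add: ennreal_le_iff)
    moreover have "max 0 (t - r) = 0" using p tw r by (auto simp: X2_def)
    ultimately have "r = t" by (simp add: max_def split: if_splits)
    then show "p \<in> graph_rt \<Omega> R" using tw t r unfolding graph_rt_def by auto
  qed
  have s: "sigma_algebra ({0..} \<times> \<Omega>) (optional_sets \<Omega> G)"
    using sets.sigma_algebra_axioms[of "optional_measure \<Omega> G"] by (simp add: opt_sets opt_space)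
  show ?thesis unfolding eq
    by (rule sa_Int[OF s cadlag_opt_set[OF IP_cadlag[OF R]] cadlag_opt_set[OF X2_cadlag[OF R]]]) auto
qed

lemma NN_alt: "\<G> \<subseteq> Pow \<Omega> \<Longrightarrow> sigma_sets \<Omega> (NN \<union> \<G>) \<subseteq> sigma_sets \<Omega> (NG \<union> \<G>)"
proof (rule sigma_sets_mono)
  have "NN \<subseteq> sigma_sets \<Omega> (NG \<union> \<G>)" unfolding NN_def' by (rule sigma_sets_mono') auto
  then show "NN \<union> \<G> \<subseteq> sigma_sets \<Omega> (NG \<union> \<G>)" by auto
qed

lemma null_char:
  assumes GP: "\<G> \<subseteq> Pow \<Omega>" and A: "A \<in> sigma_sets \<Omega> (NN \<union> \<G>)"
  shows "\<exists>A'\<in>sigma_sets \<Omega> \<G>. \<exists>E. E \<in> SS \<and> E \<in> null_sets M \<and> A - E = A' - E"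
proof -
  from A NN_alt[OF GP] have "A \<in> sigma_sets \<Omega> (NG \<union> \<G>)" by blast
  then show ?thesis
  proof (induction rule: sigma_sets.induct)
    case (Basic a)
    then show ?case
    proof
      assume "a \<in> NG"
      then obtain E where E: "E \<in> SS" "E \<in> sets M" "emeasure M E = 0" "a \<subseteq> E" by blast
      then have "E \<in> null_sets M" by (auto intro: null_setsI)
      then show ?thesis using E by (intro bexI[of _ "{}"]) (auto intro: sigma_sets.Empty)
    next
      assume "a \<in> \<G>"
      then show ?thesis by (intro bexI[of _ a] exI[of _ "{}"]) (auto intro: sigma_sets.Empty)
    qed
  next
    case Empty
    then show ?case by (intro bexI[of _ "{}"] exI[of _ "{}"]) (auto intro: sigma_sets.Empty)
  next
    case (Compl a)
    then obtain A' E where "A' \<in> sigma_sets \<Omega> \<G>" "E \<in> SS" "E \<in> null_sets M" "a - E = A' - E" by blast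
    then show ?case by (intro bexI[of _ "\<Omega> - A'"] exI[of _ E]) (auto intro: sigma_sets.Compl)
  next
    case (Union a)
    then have "\<forall>i. \<exists>A'. A' \<in> sigma_sets \<Omega> \<G> \<and> (\<exists>E. E \<in> SS \<and> E \<in> null_sets M \<and> a i - E = A' - E)" by blast
    then obtain A' where A': "\<And>i. A' i \<in> sigma_sets \<Omega> \<G>" "\<And>i. \<exists>E. E \<in> SS \<and> E \<in> null_sets M \<and> a i - E = A' i - E"
      by metis
    then obtain E where E: "\<And>i. E i \<in> SS" "\<And>i. E i \<in> null_sets M" "\<And>i. a i - E i = A' i - E i"
      by metis
    have "(\<Union>i. E i) \<in> SS" using E(1) by (auto intro: sigma_sets.Union)
    moreover have "(\<Union>i. E i) \<in> null_sets M" using E(2) by (rule null_sets_UN)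
    moreover have "(\<Union>i. A' i) \<in> sigma_sets \<Omega> \<G>" using A'(1) by (auto intro: sigma_sets.Union)
    moreover have "\<Union> (range a) - (\<Union>i. E i) = (\<Union>i. A' i) - (\<Union>i. E i)"
      using E(3) by blast
    ultimately show ?case by blast
  qed
qed

lemma rts_Pow: "random_time_sigma \<Omega> H T \<subseteq> Pow \<Omega>"
  unfolding random_time_sigma_def by (rule, rule PowI, rule sigma_sets_into_sp[rotated]) auto

lemma opt_FG: fixes X :: "real \<times> 'a \<Rightarrow> real" shows "X \<in> borel_measurable (optional_measure \<Omega> F) \<Longrightarrow> X \<in> borel_measurable (optional_measure \<Omega> G)"
proof (rule measurableI)
  fix B :: "real set" assume X: "X \<in> borel_measurable (optional_measure \<Omega> F)" and B: "B \<in> sets borel"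
  have "optional_sets \<Omega> F \<subseteq> optional_sets \<Omega> G"
    unfolding optional_sets_def
  proof (rule sigma_sets_mono', safe)
    fix Z :: "real \<times> 'a \<Rightarrow> real" and B :: "real set"
    assume Z: "cadlag_adapted \<Omega> F Z" "B \<in> sets borel"
    then have "cadlag_adapted \<Omega> G Z" using F_G unfolding cadlag_adapted_def by blast
    then show "\<exists>X Ba. {p \<in> {0..} \<times> \<Omega>. Z p \<in> B} = {p \<in> {0..} \<times> \<Omega>. X p \<in> Ba} \<and> cadlag_adapted \<Omega> G X \<and> Ba \<in> sets borel"
      using Z by blast
  qed
  moreover have "X -` B \<inter> space (optional_measure \<Omega> F) \<in> sets (optional_measure \<Omega> F)"
    by (rule measurable_sets[OF X B])
  ultimately show "X -` B \<inter> space (optional_measure \<Omega> G) \<in> sets (optional_measure \<Omega> G)"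
    by (auto simp: opt_sets opt_space)
qed auto


abbreviation "PM \<equiv> (borel :: ennreal measure) \<Otimes>\<^sub>M optional_measure (space M) F"
definition Phi :: "('a \<Rightarrow> ennreal) \<Rightarrow> 'a \<Rightarrow> ennreal \<times> (real \<times> 'a)" where
  "Phi R \<omega> = (ndiv (\<tau> \<omega>) (R \<omega>), (enn2real (R \<omega>), \<omega>))"
abbreviation "C0 R \<equiv> sigma_fun (space M) (\<lambda>\<omega>. ndiv (\<tau> \<omega>) (R \<omega>)) \<union> random_time_sigma (space M) F R"
abbreviation "RHS R \<equiv> sigma_sets (space M) (NN \<union> sigma_fun (space M) (\<lambda>\<omega>. ndiv (\<tau> \<omega>) (R \<omega>))
                             \<union> random_time_sigma (space M) F R)"

lemma Phi_space: "\<omega> \<in> \<Omega> \<Longrightarrow> Phi R \<omega> \<in> space PM"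
  by (simp add: space_pair_measure opt_space Phi_def)
lemma Phi_space': "\<omega> \<in> \<Omega> \<Longrightarrow> Phi R \<omega> \<in> space borel \<times> space (optional_measure \<Omega> F)"
  by (simp add: opt_space Phi_def)

lemma C0_Pow: "C0 R \<subseteq> Pow \<Omega>" using sigma_fun_Pow rts_Pow by blast

lemma F1:
  assumes A: "A \<in> sigma_sets \<Omega> (C0 R)"
  shows "\<exists>S'\<in>sets PM. {\<omega>\<in>\<Omega>. R \<omega> < \<infinity>} \<inter> A = {\<omega>\<in>\<Omega>. R \<omega> < \<infinity> \<and> Phi R \<omega> \<in> S'}"
proof -
  let ?g1 = "{(\<lambda>\<omega>. ndiv (\<tau> \<omega>) (R \<omega>)) -` B \<inter> \<Omega> | B. B \<in> sets (borel :: ennreal measure)}"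
  let ?g2 = "{{\<omega>\<in>\<Omega>. (if R \<omega> < \<infinity> then X (enn2real (R \<omega>), \<omega>) else (0::real)) \<in> B} | X B.
        X \<in> borel_measurable (optional_measure \<Omega> F) \<and> B \<in> sets borel}"
  have "C0 R \<subseteq> sigma_sets \<Omega> (?g1 \<union> ?g2)"
    unfolding sigma_fun_def random_time_sigma_def
    by (intro Un_least sigma_sets_mono') auto
  then have "A \<in> sigma_sets \<Omega> (?g1 \<union> ?g2)" using A sigma_sets_mono by blast
  then show ?thesis
  proof (induction rule: sigma_sets.induct)
    case (Basic a)
    then show ?case
    proof
      assume "a \<in> ?g1"
      then obtain B where B: "a = (\<lambda>\<omega>. ndiv (\<tau> \<omega>) (R \<omega>)) -` B \<inter> \<Omega>" "B \<in> sets borel" by blast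
      have "B \<times> space (optional_measure \<Omega> F) \<in> sets PM" using B(2) by (intro pair_measureI) auto
      moreover have "{\<omega>\<in>\<Omega>. R \<omega> < \<infinity>} \<inter> a = {\<omega>\<in>\<Omega>. R \<omega> < \<infinity> \<and> Phi R \<omega> \<in> B \<times> space (optional_measure \<Omega> F)}"
        using B(1) by (auto simp: Phi_def opt_space)
      ultimately show ?thesis by blast
    next
      assume "a \<in> ?g2"
      then obtain X B where XB: "a = {\<omega>\<in>\<Omega>. (if R \<omega> < \<infinity> then X (enn2real (R \<omega>), \<omega>) else (0::real)) \<in> B}"
        "X \<in> borel_measurable (optional_measure \<Omega> F)" "B \<in> sets borel" by blast
      have "UNIV \<times> (X -` B \<inter> space (optional_measure \<Omega> F)) \<in> sets PM"
        using measurable_sets[OF XB(2,3)] by (intro pair_measureI) auto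
      moreover have "{\<omega>\<in>\<Omega>. R \<omega> < \<infinity>} \<inter> a = {\<omega>\<in>\<Omega>. R \<omega> < \<infinity> \<and> Phi R \<omega> \<in> UNIV \<times> (X -` B \<inter> space (optional_measure \<Omega> F))}"
        using XB(1) by (auto simp: Phi_def opt_space)
      ultimately show ?thesis by blast
    qed
  next
    case Empty then show ?case by (intro bexI[of _ "{}"]) auto
  next
    case (Compl a)
    then obtain S' where S': "S' \<in> sets PM" "{\<omega>\<in>\<Omega>. R \<omega> < \<infinity>} \<inter> a = {\<omega>\<in>\<Omega>. R \<omega> < \<infinity> \<and> Phi R \<omega> \<in> S'}" by blast
    have "space PM - S' \<in> sets PM" using S'(1) by auto
    moreover have "{\<omega>\<in>\<Omega>. R \<omega> < \<infinity>} \<inter> (\<Omega> - a) = {\<omega>\<in>\<Omega>. R \<omega> < \<infinity> \<and> Phi R \<omega> \<in> space PM - S'}"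
      using S'(2) Phi_space by blast
    ultimately show ?case by blast
  next
    case (Union a)
    have "\<forall>i. \<exists>S'. S' \<in> sets PM \<and> {\<omega>\<in>\<Omega>. R \<omega> < \<infinity>} \<inter> a i = {\<omega>\<in>\<Omega>. R \<omega> < \<infinity> \<and> Phi R \<omega> \<in> S'}"
      by (intro allI, rule Union.IH[unfolded Bex_def])
    from choice[OF this] obtain S' where S': "\<forall>i. S' i \<in> sets PM \<and> {\<omega>\<in>\<Omega>. R \<omega> < \<infinity>} \<inter> a i = {\<omega>\<in>\<Omega>. R \<omega> < \<infinity> \<and> Phi R \<omega> \<in> S' i}"
      by (elim exE) blast
    have mem: "(\<Union>i. S' i) \<in> sets PM" by (rule sa_UN[OF sets.sigma_algebra_axioms]) (use S' in blast)
    have eq: "{\<omega>\<in>\<Omega>. R \<omega> < \<infinity>} \<inter> \<Union>(range a) = {\<omega>\<in>\<Omega>. R \<omega> < \<infinity> \<and> Phi R \<omega> \<in> (\<Union>i. S' i)}"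
      using S' by blast
    show ?case by (rule bexI[where x="\<Union>i. S' i"]) (rule eq, rule mem)
  qed
qed

lemma F2:
  assumes S: "S' \<in> sets PM"
  shows "\<exists>A\<in>sigma_sets \<Omega> (C0 R). {\<omega>\<in>\<Omega>. R \<omega> < \<infinity>} \<inter> A = {\<omega>\<in>\<Omega>. R \<omega> < \<infinity> \<and> Phi R \<omega> \<in> S'}"
proof -
  have sa: "sigma_algebra \<Omega> (sigma_sets \<Omega> (C0 R))" by (rule sigma_algebra_sigma_sets[OF C0_Pow])
  from S show ?thesis unfolding sets_pair_measure
  proof (induction rule: sigma_sets.induct)
    case (Basic s)
    then obtain a b where ab: "s = a \<times> b" "a \<in> sets (borel :: ennreal measure)" "b \<in> sets (optional_measure \<Omega> F)" by blast
    let ?A1 = "{\<omega>\<in>\<Omega>. ndiv (\<tau> \<omega>) (R \<omega>) \<in> a}"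
    let ?A2 = "{\<omega>\<in>\<Omega>. (if R \<omega> < \<infinity> then indicator b (enn2real (R \<omega>), \<omega>) else (0::real)) \<in> {1}}"
    have "?A1 \<in> sigma_fun \<Omega> (\<lambda>\<omega>. ndiv (\<tau> \<omega>) (R \<omega>))" by (rule sigma_fun_gen[OF ab(2)])
    then have 1: "?A1 \<in> sigma_sets \<Omega> (C0 R)" by blast
    have ind: "(indicator b :: real \<times> 'a \<Rightarrow> real) \<in> borel_measurable (optional_measure \<Omega> F)"
      using ab(3) by (rule borel_measurable_indicator)
    have "?A2 \<in> random_time_sigma \<Omega> F R" unfolding random_time_sigma_def
      by (rule sigma_sets.Basic, rule CollectI, rule exI[of _ "indicator b"], rule exI[of _ "{1}"]) (use ind in auto)
    then have 2: "?A2 \<in> sigma_sets \<Omega> (C0 R)" by blast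
    have "?A1 \<inter> ?A2 \<in> sigma_sets \<Omega> (C0 R)" by (rule sa_Int[OF sa 1 2])
    moreover have "{\<omega>\<in>\<Omega>. R \<omega> < \<infinity>} \<inter> (?A1 \<inter> ?A2) = {\<omega>\<in>\<Omega>. R \<omega> < \<infinity> \<and> Phi R \<omega> \<in> s}"
      using ab(1) by (auto simp: Phi_def indicator_def)
    ultimately show ?case by blast
  next
    case Empty then show ?case by (intro bexI[of _ "{}"]) (auto intro: sigma_sets.Empty)
  next
    case (Compl s)
    then obtain A where A: "A \<in> sigma_sets \<Omega> (C0 R)" "{\<omega>\<in>\<Omega>. R \<omega> < \<infinity>} \<inter> A = {\<omega>\<in>\<Omega>. R \<omega> < \<infinity> \<and> Phi R \<omega> \<in> s}" by blast
    have "\<Omega> - A \<in> sigma_sets \<Omega> (C0 R)" using A(1) by (rule sigma_sets.Compl)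
    moreover have "{\<omega>\<in>\<Omega>. R \<omega> < \<infinity>} \<inter> (\<Omega> - A) = {\<omega>\<in>\<Omega>. R \<omega> < \<infinity> \<and> Phi R \<omega> \<in> space borel \<times> space (optional_measure \<Omega> F) - s}"
      using A(2) Phi_space' by blast
    ultimately show ?case by blast
  next
    case (Union s)
    have "\<forall>i. \<exists>A. A \<in> sigma_sets \<Omega> (C0 R) \<and> {\<omega>\<in>\<Omega>. R \<omega> < \<infinity>} \<inter> A = {\<omega>\<in>\<Omega>. R \<omega> < \<infinity> \<and> Phi R \<omega> \<in> s i}"
      by (intro allI, rule Union.IH[unfolded Bex_def])
    from choice[OF this] obtain A where A: "\<forall>i. A i \<in> sigma_sets \<Omega> (C0 R) \<and> {\<omega>\<in>\<Omega>. R \<omega> < \<infinity>} \<inter> A i = {\<omega>\<in>\<Omega>. R \<omega> < \<infinity> \<and> Phi R \<omega> \<in> s i}"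
      by (elim exE) blast
    have mem: "(\<Union>i. A i) \<in> sigma_sets \<Omega> (C0 R)" by (rule sigma_sets.Union) (use A in blast)
    have eq: "{\<omega>\<in>\<Omega>. R \<omega> < \<infinity>} \<inter> (\<Union>i. A i) = {\<omega>\<in>\<Omega>. R \<omega> < \<infinity> \<and> Phi R \<omega> \<in> \<Union>(range s)}"
      using A by blast
    show ?case by (rule bexI[where x="\<Union>i. A i"]) (rule eq, rule mem)
  qed
qed

lemma trace_ind:
  assumes A: "A \<in> sigma_sets \<Omega> \<A>" and R: "stp R"
    and gen: "\<And>a. a \<in> \<A> \<Longrightarrow> {\<omega>\<in>\<Omega>. R \<omega> < \<infinity>} \<inter> a \<in> GR R"
  shows "{\<omega>\<in>\<Omega>. R \<omega> < \<infinity>} \<inter> A \<in> GR R"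
  using A
proof (induction rule: sigma_sets.induct)
  case (Basic a) then show ?case by (rule gen)
next
  case Empty then show ?case using sa_empty[OF GR_sa[OF R]] by simp
next
  case (Compl a)
  have "{\<omega>\<in>\<Omega>. R \<omega> < \<infinity>} \<inter> (\<Omega> - a) = {\<omega>\<in>\<Omega>. R \<omega> < \<infinity>} - ({\<omega>\<in>\<Omega>. R \<omega> < \<infinity>} \<inter> a)" by blast
  then show ?case using sa_Diff[OF GR_sa[OF R] U_GR[OF R] Compl.IH] by simp
next
  case (Union a)
  have "{\<omega>\<in>\<Omega>. R \<omega> < \<infinity>} \<inter> \<Union>(range a) = (\<Union>i. {\<omega>\<in>\<Omega>. R \<omega> < \<infinity>} \<inter> a i)" by blast
  then show ?case using sa_UN[OF GR_sa[OF R], OF Union.IH] by simp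
qed

lemma ndiv_GR:
  assumes R: "stp R" and B: "B \<in> sets (borel :: ennreal measure)"
  shows "{\<omega>\<in>\<Omega>. R \<omega> < \<infinity>} \<inter> ((\<lambda>\<omega>. ndiv (\<tau> \<omega>) (R \<omega>)) -` B \<inter> \<Omega>) \<in> GR R"
proof (rule GR_intro[OF R])
  fix t :: real assume t: "t \<ge> 0"
  have [measurable]: "(\<lambda>\<omega>. ndiv (\<tau> \<omega>) (ennreal t)) \<in> borel_measurable (Gm t)" by (rule stop_ndiv_meas[OF tau_stp t])
  have [measurable]: "(\<lambda>\<omega>. min (R \<omega>) (ennreal t)) \<in> borel_measurable (Gm t)" by (rule stop_min_meas[OF R t])
  have m: "(\<lambda>\<omega>. ndiv (ndiv (\<tau> \<omega>) (ennreal t)) (min (R \<omega>) (ennreal t))) -` B \<inter> space (Gm t) \<in> sets (Gm t)"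
    by (rule measurable_sets[OF _ B]) measurable
  then have m': "(\<lambda>\<omega>. ndiv (ndiv (\<tau> \<omega>) (ennreal t)) (min (R \<omega>) (ennreal t))) -` B \<inter> \<Omega> \<in> G t"
    using t by simp
  have key: "ndiv (\<tau> \<omega>) (R \<omega>) = ndiv (ndiv (\<tau> \<omega>) (ennreal t)) (min (R \<omega>) (ennreal t))"
    if "R \<omega> \<le> ennreal t" for \<omega>
    using that by (cases "\<tau> \<omega> \<le> R \<omega>"; cases "\<tau> \<omega> \<le> ennreal t")
      (auto simp: ndiv_def min_absorb1 top_unique dest: order.trans)
  have eq: "{\<omega>\<in>\<Omega>. R \<omega> < \<infinity>} \<inter> ((\<lambda>\<omega>. ndiv (\<tau> \<omega>) (R \<omega>)) -` B \<inter> \<Omega>) \<inter> {\<omega>\<in>\<Omega>. R \<omega> \<le> ennreal t}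
     = {\<omega>\<in>\<Omega>. R \<omega> \<le> ennreal t} \<inter> ((\<lambda>\<omega>. ndiv (ndiv (\<tau> \<omega>) (ennreal t)) (min (R \<omega>) (ennreal t))) -` B \<inter> \<Omega>)"
    using key ennreal_less_top le_less_trans by auto
  show "{\<omega>\<in>\<Omega>. R \<omega> < \<infinity>} \<inter> ((\<lambda>\<omega>. ndiv (\<tau> \<omega>) (R \<omega>)) -` B \<inter> \<Omega>) \<inter> {\<omega>\<in>\<Omega>. R \<omega> \<le> ennreal t} \<in> G t"
    unfolding eq by (rule sa_Int[OF G_sa[OF t] stop_le[OF R t] m'])
qed auto

lemma rts_GR:
  assumes R: "stp R" and X: "X \<in> borel_measurable (optional_measure \<Omega> F)" and B: "B \<in> sets borel"
  shows "{\<omega>\<in>\<Omega>. R \<omega> < \<infinity>} \<inter> {\<omega>\<in>\<Omega>. (if R \<omega> < \<infinity> then X (enn2real (R \<omega>), \<omega>) else (0::real)) \<in> B} \<in> GR R"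
proof -
  have "{\<omega>\<in>\<Omega>. R \<omega> < \<infinity>} \<inter> {\<omega>\<in>\<Omega>. (if R \<omega> < \<infinity> then X (enn2real (R \<omega>), \<omega>) else (0::real)) \<in> B}
     = {\<omega>\<in>\<Omega>. R \<omega> < \<infinity> \<and> X (enn2real (R \<omega>), \<omega>) \<in> B}" by auto
  then show ?thesis using H3[OF R opt_FG[OF X] B] by simp
qed

lemma NN_GR: assumes R: "stp R" and a: "a \<in> NN" shows "a \<in> GR R"
  unfolding stopped_sigma_def
proof (intro CollectI conjI allI impI)
  show "a \<in> GF" using a NN_G[of 0] G_GF[of 0] by auto
  fix t :: real assume t: "t \<ge> 0"
  show "a \<inter> {\<omega>\<in>\<Omega>. R \<omega> \<le> ennreal t} \<in> G t" using sa_Int[OF G_sa[OF t]] a NN_G stop_le[OF R t] by blast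
qed

lemma stepI: assumes R: "stp R" and A: "A \<in> RHS R" shows "{\<omega>\<in>\<Omega>. R \<omega> < \<infinity>} \<inter> A \<in> GR R"
proof (rule trace_ind[OF A R])
  fix a assume "a \<in> NN \<union> sigma_fun \<Omega> (\<lambda>\<omega>. ndiv (\<tau> \<omega>) (R \<omega>)) \<union> random_time_sigma \<Omega> F R"
  then consider "a \<in> NN" | "a \<in> sigma_fun \<Omega> (\<lambda>\<omega>. ndiv (\<tau> \<omega>) (R \<omega>))" | "a \<in> random_time_sigma \<Omega> F R" by blast
  then show "{\<omega>\<in>\<Omega>. R \<omega> < \<infinity>} \<inter> a \<in> GR R"
  proof cases
    case 1 then show ?thesis using sa_Int[OF GR_sa[OF R] U_GR[OF R] NN_GR[OF R]] by blast
  next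
    case 2
    then show ?thesis unfolding sigma_fun_def
    proof (rule trace_ind[OF _ R])
      fix b assume "b \<in> {(\<lambda>\<omega>. ndiv (\<tau> \<omega>) (R \<omega>)) -` B \<inter> \<Omega> | B. B \<in> sets borel}"
      then obtain B where "b = (\<lambda>\<omega>. ndiv (\<tau> \<omega>) (R \<omega>)) -` B \<inter> \<Omega>" "B \<in> sets borel" by blast
      then show "{\<omega>\<in>\<Omega>. R \<omega> < \<infinity>} \<inter> b \<in> GR R" using ndiv_GR[OF R] by simp
    qed
  next
    case 3
    then show ?thesis unfolding random_time_sigma_def
    proof (rule trace_ind[OF _ R])
      fix b assume "b \<in> {{\<omega>\<in>\<Omega>. (if R \<omega> < \<infinity> then X (enn2real (R \<omega>), \<omega>) else (0::real)) \<in> B} | X B.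
        X \<in> borel_measurable (optional_measure \<Omega> F) \<and> B \<in> sets borel}"
      then obtain X B where "b = {\<omega>\<in>\<Omega>. (if R \<omega> < \<infinity> then X (enn2real (R \<omega>), \<omega>) else (0::real)) \<in> B}"
        "X \<in> borel_measurable (optional_measure \<Omega> F)" "B \<in> sets borel" by blast
      then show "{\<omega>\<in>\<Omega>. R \<omega> < \<infinity>} \<inter> b \<in> GR R" using rts_GR[OF R] by simp
    qed
  qed
qed

lemma RHS_sa: "sigma_algebra \<Omega> (RHS R)"
  by (rule sigma_algebra_sigma_sets) (use NN_Pow sigma_fun_Pow rts_Pow in auto)

lemma SS_sa: "sigma_algebra \<Omega> SS"
  by (rule sigma_algebra_sigma_sets) (use sigma_fun_Pow Finf_F_sets sets.sets_into_space in blast)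


lemma trace_mem: "B \<in> T \<Longrightarrow> D \<inter> B \<in> trace_on D T"
  unfolding trace_on_def by blast

lemma sub1: assumes R: "stp R"
  shows "trace_on {\<omega>\<in>\<Omega>. R \<omega> < \<infinity>} (RHS R) \<subseteq> trace_on {\<omega>\<in>\<Omega>. R \<omega> < \<infinity>} (GR R)"
proof
  fix x assume "x \<in> trace_on {\<omega>\<in>\<Omega>. R \<omega> < \<infinity>} (RHS R)"
  then obtain A where A: "x = {\<omega>\<in>\<Omega>. R \<omega> < \<infinity>} \<inter> A" "A \<in> RHS R" unfolding trace_on_def by blast
  then have "{\<omega>\<in>\<Omega>. R \<omega> < \<infinity>} \<inter> A \<in> GR R" using stepI[OF R] by blast
  then have "{\<omega>\<in>\<Omega>. R \<omega> < \<infinity>} \<inter> ({\<omega>\<in>\<Omega>. R \<omega> < \<infinity>} \<inter> A) \<in> trace_on {\<omega>\<in>\<Omega>. R \<omega> < \<infinity>} (GR R)"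
    by (rule trace_mem)
  then show "x \<in> trace_on {\<omega>\<in>\<Omega>. R \<omega> < \<infinity>} (GR R)" using A(1) by (simp add: Int_absorb)
qed

lemma NG_NN: "E \<in> NG \<Longrightarrow> E \<in> NN"
  unfolding NN_def' by (rule sigma_sets.Basic)

lemma NN_RHS: "NN \<subseteq> RHS R" by auto

lemma C0_RHS: "sigma_sets \<Omega> (C0 R) \<subseteq> RHS R"
  by (rule sigma_sets_mono') auto

lemma stepII: assumes R: "stp R" and Lo: "graph_rt \<Omega> R \<in> Lo M F \<tau>"
  shows "trace_on {\<omega>\<in>\<Omega>. R \<omega> < \<infinity>} (GR R) \<subseteq> trace_on {\<omega>\<in>\<Omega>. R \<omega> < \<infinity>} (RHS R)"
proof
  let ?U = "{\<omega>\<in>\<Omega>. R \<omega> < \<infinity>}"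
  fix x assume "x \<in> trace_on ?U (GR R)"
  then obtain B where B: "x = ?U \<inter> B" "B \<in> GR R" unfolding trace_on_def by blast
  have BO: "B \<subseteq> \<Omega>" using B(2) sa_Pow[OF GR_sa[OF R]] by blast
  define RB where "RB \<omega> = (if \<omega> \<in> B then R \<omega> else top)" for \<omega>
  have RBs: "stp RB" unfolding stopping_time_wrt_def
  proof (intro allI impI)
    fix t :: real assume t: "t \<ge> 0"
    have "{\<omega>\<in>\<Omega>. RB \<omega> \<le> ennreal t} = B \<inter> {\<omega>\<in>\<Omega>. R \<omega> \<le> ennreal t}" using BO by (auto simp: RB_def top_unique)
    then show "{\<omega>\<in>\<Omega>. RB \<omega> \<le> ennreal t} \<in> G t" using B(2) t unfolding stopped_sigma_def by auto
  qed
  have Ym: "IP RB \<in> borel_measurable (optional_measure \<Omega> G)" by (rule cadlag_meas[OF IP_cadlag[OF RBs]])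
  from Lo Ym have "splits_on M F \<tau> (IP RB) (graph_rt \<Omega> R)" unfolding Lo_def by blast
  then obtain Y' Y'' E where Y': "Y' \<in> borel_measurable (optional_measure \<Omega> F)"
    and Y'': "(\<lambda>(u::ennreal, p). Y'' u p) \<in> borel_measurable PM"
    and E: "E \<in> SS" "E \<in> sets M" "emeasure M E = 0"
    and idt: "\<forall>\<omega>\<in>\<Omega> - E. \<forall>t\<ge>0. (t, \<omega>) \<in> graph_rt \<Omega> R \<longrightarrow>
        IP RB (t, \<omega>) = (if ennreal t < \<tau> \<omega> then Y' (t, \<omega>) else Y'' (\<tau> \<omega>) (t, \<omega>))"
    unfolding splits_on_def by blast
  define K where "K z = (if fst z = top then Y' (snd z) else (\<lambda>(u, p). Y'' u p) z)" for z
  have Km: "K \<in> borel_measurable PM" unfolding K_def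
  proof (rule measurable_If)
    show "(\<lambda>z. Y' (snd z)) \<in> borel_measurable PM" by (rule measurable_compose[OF measurable_snd Y'])
    show "(\<lambda>z. case z of (u, p) \<Rightarrow> Y'' u p) \<in> borel_measurable PM" by (rule Y'')
    have "{z \<in> space PM. fst z = top} = {top} \<times> space (optional_measure \<Omega> F)"
      by (auto simp: space_pair_measure)
    then show "{z \<in> space PM. fst z = top} \<in> sets PM" by auto
  qed
  obtain A0 where A0: "A0 \<in> sigma_sets \<Omega> (C0 R)" "?U \<inter> A0 = {\<omega>\<in>\<Omega>. R \<omega> < \<infinity> \<and> Phi R \<omega> \<in> K -` {1} \<inter> space PM}"
    using F2[OF measurable_sets[OF Km, of "{1}"]] by auto
  have key: "\<omega> \<in> B \<longleftrightarrow> \<omega> \<in> A0" if w: "\<omega> \<in> ?U" "\<omega> \<notin> E" for \<omega>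
  proof -
    from w obtain t where t: "R \<omega> = ennreal t" "0 \<le> t" by (cases "R \<omega>" rule: ennreal_cases) auto
    have ww: "\<omega> \<in> \<Omega>" using w by simp
    have g: "(t, \<omega>) \<in> graph_rt \<Omega> R" using t ww unfolding graph_rt_def by auto
    have Yv: "IP RB (t, \<omega>) = (if \<omega> \<in> B then 1 else 0)" using t by (auto simp: IP_def RB_def top_unique)
    have Kv: "K (Phi R \<omega>) = (if ennreal t < \<tau> \<omega> then Y' (t, \<omega>) else Y'' (\<tau> \<omega>) (t, \<omega>))"
      using t by (auto simp: K_def Phi_def ndiv_def not_le top_unique)
    have YK: "IP RB (t, \<omega>) = K (Phi R \<omega>)" using idt w ww g t Kv by auto
    have "\<omega> \<in> B \<longleftrightarrow> K (Phi R \<omega>) = 1" using Yv YK by (cases "\<omega> \<in> B") auto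
    also have "\<dots> \<longleftrightarrow> \<omega> \<in> ?U \<inter> A0" using A0(2) w Phi_space[OF ww, of R] by auto
    finally show ?thesis using w by blast
  qed
  define A where "A = (A0 \<inter> (\<Omega> - E)) \<union> (?U \<inter> B \<inter> E)"
  have E_NN: "E \<in> NN" using E SS_Pow by (intro NG_NN) blast
  have E2_NN: "?U \<inter> B \<inter> E \<in> NN" using E SS_Pow by (intro NG_NN) blast
  have "A \<in> RHS R" unfolding A_def
    using sa_Un[OF RHS_sa sa_Int[OF RHS_sa] ] sa_compl[OF RHS_sa] C0_RHS A0(1) E_NN E2_NN NN_RHS by blast
  moreover have "?U \<inter> A = ?U \<inter> B" unfolding A_def using key by blast
  ultimately show "x \<in> trace_on ?U (RHS R)" using B(1) trace_mem by metis
qed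

lemma stepIII: assumes R: "stp R"
  and incl: "trace_on {\<omega>\<in>\<Omega>. R \<omega> < \<infinity>} (GR R) \<subseteq> trace_on {\<omega>\<in>\<Omega>. R \<omega> < \<infinity>} (RHS R)"
  shows "graph_rt \<Omega> R \<in> Lo M F \<tau>"
proof -
  let ?U = "{\<omega>\<in>\<Omega>. R \<omega> < \<infinity>}"
  have rep_set: "\<exists>H\<in>borel_measurable PM. \<exists>E. E \<in> SS \<and> E \<in> null_sets M \<and>
      (\<forall>\<omega>\<in>\<Omega> - E. R \<omega> < \<infinity> \<longrightarrow> indicator A (enn2real (R \<omega>), \<omega>) = (H (Phi R \<omega>) :: real))"
    if A: "A \<in> sets (optional_measure \<Omega> G)" for A
  proof -
    let ?V = "{\<omega>\<in>\<Omega>. R \<omega> < \<infinity> \<and> (enn2real (R \<omega>), \<omega>) \<in> A}"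
    have "?V \<in> GR R" using H2[OF R] A opt_sets by auto
    then have "?U \<inter> ?V \<in> trace_on ?U (GR R)" by (rule trace_mem)
    then have "?U \<inter> ?V \<in> trace_on ?U (RHS R)" using incl by blast
    then obtain A1 where A1: "?U \<inter> ?V = ?U \<inter> A1" "A1 \<in> RHS R" unfolding trace_on_def by blast
    have "A1 \<in> sigma_sets \<Omega> (NN \<union> C0 R)" using A1(2) by (simp add: Un_assoc)
    from null_char[OF C0_Pow this] obtain A' E where A': "A' \<in> sigma_sets \<Omega> (C0 R)" "E \<in> SS" "E \<in> null_sets M" "A1 - E = A' - E"
      by blast
    from F1[OF A'(1)] obtain S' where S': "S' \<in> sets PM" "?U \<inter> A' = {\<omega>\<in>\<Omega>. R \<omega> < \<infinity> \<and> Phi R \<omega> \<in> S'}" by blast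
    have hm: "(indicator S' :: _ \<Rightarrow> real) \<in> borel_measurable PM" using S'(1) by (rule borel_measurable_indicator)
    have hi: "\<forall>\<omega>\<in>\<Omega> - E. R \<omega> < \<infinity> \<longrightarrow> indicator A (enn2real (R \<omega>), \<omega>) = (indicator S' (Phi R \<omega>) :: real)"
    proof (intro ballI impI)
      fix \<omega> assume w: "\<omega> \<in> \<Omega> - E" "R \<omega> < \<infinity>"
      have "(enn2real (R \<omega>), \<omega>) \<in> A \<longleftrightarrow> \<omega> \<in> ?U \<inter> ?V" using w by auto
      also have "\<dots> \<longleftrightarrow> \<omega> \<in> ?U \<inter> A1" using A1(1) by simp
      also have "\<dots> \<longleftrightarrow> \<omega> \<in> ?U \<inter> A'" using A'(4) w by blast
      also have "\<dots> \<longleftrightarrow> Phi R \<omega> \<in> S'" using S'(2) w by blast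
      finally show "indicator A (enn2real (R \<omega>), \<omega>) = (indicator S' (Phi R \<omega>) :: real)"
        by (simp add: indicator_def)
    qed
    show ?thesis by (rule bexI[OF _ hm], intro exI[of _ E] conjI) (use A' hi in auto)
  qed
  have rep_nn: "\<exists>H\<in>borel_measurable PM. \<exists>E. E \<in> SS \<and> E \<in> null_sets M \<and>
      (\<forall>\<omega>\<in>\<Omega> - E. R \<omega> < \<infinity> \<longrightarrow> u (enn2real (R \<omega>), \<omega>) = H (Phi R \<omega>))"
    if u: "u \<in> borel_measurable (optional_measure \<Omega> G)" "\<And>x. 0 \<le> u x" for u :: "real \<times> 'a \<Rightarrow> real"
    using u
  proof (induction u rule: borel_measurable_induct_real)
    case (set A) then show ?case by (rule rep_set)
  next
    case (mult u c)
    then obtain H E where "H \<in> borel_measurable PM" "E \<in> SS" "E \<in> null_sets M"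
      "\<forall>\<omega>\<in>\<Omega> - E. R \<omega> < \<infinity> \<longrightarrow> u (enn2real (R \<omega>), \<omega>) = H (Phi R \<omega>)" by blast
    then show ?case by (intro bexI[of _ "\<lambda>z. c * H z"] exI[of _ E]) auto
  next
    case (add u v)
    obtain H1 E1 where 1: "H1 \<in> borel_measurable PM" "E1 \<in> SS" "E1 \<in> null_sets M"
      "\<forall>\<omega>\<in>\<Omega> - E1. R \<omega> < \<infinity> \<longrightarrow> u (enn2real (R \<omega>), \<omega>) = H1 (Phi R \<omega>)" using add by blast
    obtain H2 E2 where 2: "H2 \<in> borel_measurable PM" "E2 \<in> SS" "E2 \<in> null_sets M"
      "\<forall>\<omega>\<in>\<Omega> - E2. R \<omega> < \<infinity> \<longrightarrow> v (enn2real (R \<omega>), \<omega>) = H2 (Phi R \<omega>)" using add by blast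
    have "E1 \<union> E2 \<in> SS" using 1(2) 2(2) by (rule sigma_sets_Un)
    moreover have "E1 \<union> E2 \<in> null_sets M" using 1(3) 2(3) by (rule null_sets.Un)
    moreover have hm: "(\<lambda>z. H2 z + H1 z) \<in> borel_measurable PM" using 2(1) 1(1) by (rule borel_measurable_add)
    moreover have "\<forall>\<omega>\<in>\<Omega> - (E1 \<union> E2). R \<omega> < \<infinity> \<longrightarrow> v (enn2real (R \<omega>), \<omega>) + u (enn2real (R \<omega>), \<omega>) = H2 (Phi R \<omega>) + H1 (Phi R \<omega>)"
      using 1(4) 2(4) by auto
    ultimately show ?case by (intro bexI[OF _ hm] exI[of _ "E1 \<union> E2"]) auto
  next
    case (seq U)
    have "\<forall>i. \<exists>H. H \<in> borel_measurable PM \<and> (\<exists>E. E \<in> SS \<and> E \<in> null_sets M \<and>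
      (\<forall>\<omega>\<in>\<Omega> - E. R \<omega> < \<infinity> \<longrightarrow> U i (enn2real (R \<omega>), \<omega>) = H (Phi R \<omega>)))"
      by (intro allI, rule seq.IH[unfolded Bex_def])
    from choice[OF this] obtain H where H0: "\<forall>i. H i \<in> borel_measurable PM \<and> (\<exists>E. E \<in> SS \<and> E \<in> null_sets M \<and>
      (\<forall>\<omega>\<in>\<Omega> - E. R \<omega> < \<infinity> \<longrightarrow> U i (enn2real (R \<omega>), \<omega>) = H i (Phi R \<omega>)))" by (elim exE) blast
    have H: "\<And>i. H i \<in> borel_measurable PM" using H0 by blast
    have "\<forall>i. \<exists>E. E \<in> SS \<and> E \<in> null_sets M \<and>
      (\<forall>\<omega>\<in>\<Omega> - E. R \<omega> < \<infinity> \<longrightarrow> U i (enn2real (R \<omega>), \<omega>) = H i (Phi R \<omega>))" using H0 by blast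
    from choice[OF this] obtain E where HE0: "\<forall>i. E i \<in> SS \<and> E i \<in> null_sets M \<and>
      (\<forall>\<omega>\<in>\<Omega> - E i. R \<omega> < \<infinity> \<longrightarrow> U i (enn2real (R \<omega>), \<omega>) = H i (Phi R \<omega>))" by (elim exE) blast
    have HE: "\<And>i. E i \<in> SS" "\<And>i. E i \<in> null_sets M"
      "\<And>i. \<forall>\<omega>\<in>\<Omega> - E i. R \<omega> < \<infinity> \<longrightarrow> U i (enn2real (R \<omega>), \<omega>) = H i (Phi R \<omega>)"
      using HE0 by blast+
    have hm: "(\<lambda>z. lim (\<lambda>i. H i z)) \<in> borel_measurable PM" by (rule borel_measurable_lim_metric) (rule H(1))
    moreover have "(\<Union>i. E i) \<in> SS" using HE(1) by (rule sigma_sets.Union)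
    moreover have "(\<Union>i. E i) \<in> null_sets M" using HE(2) by (rule null_sets_UN)
    moreover have "\<forall>\<omega>\<in>\<Omega> - (\<Union>i. E i). R \<omega> < \<infinity> \<longrightarrow> u (enn2real (R \<omega>), \<omega>) = lim (\<lambda>i. H i (Phi R \<omega>))"
    proof (intro ballI impI)
      fix \<omega> assume w: "\<omega> \<in> \<Omega> - (\<Union>i. E i)" "R \<omega> < \<infinity>"
      have "(enn2real (R \<omega>), \<omega>) \<in> space (optional_measure \<Omega> G)" using w by (simp add: opt_space)
      then have "(\<lambda>i. U i (enn2real (R \<omega>), \<omega>)) \<longlonglongrightarrow> u (enn2real (R \<omega>), \<omega>)" using seq by blast
      moreover have "U i (enn2real (R \<omega>), \<omega>) = H i (Phi R \<omega>)" for i using HE(3)[of i] w by blast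
      ultimately have "(\<lambda>i. H i (Phi R \<omega>)) \<longlonglongrightarrow> u (enn2real (R \<omega>), \<omega>)" by simp
      then show "u (enn2real (R \<omega>), \<omega>) = lim (\<lambda>i. H i (Phi R \<omega>))" by (simp add: limI)
    qed
    ultimately show ?case by (intro bexI[OF _ hm] exI[of _ "\<Union>i. E i"]) auto
  qed
  have rep: "\<exists>H\<in>borel_measurable PM. \<exists>E. E \<in> SS \<and> E \<in> null_sets M \<and>
      (\<forall>\<omega>\<in>\<Omega> - E. R \<omega> < \<infinity> \<longrightarrow> Y (enn2real (R \<omega>), \<omega>) = H (Phi R \<omega>))"
    if Y: "Y \<in> borel_measurable (optional_measure \<Omega> G)" for Y :: "real \<times> 'a \<Rightarrow> real"
  proof -
    have [measurable]: "Y \<in> borel_measurable (optional_measure \<Omega> G)" by (rule Y)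
    have m1: "(\<lambda>p. max (Y p) 0) \<in> borel_measurable (optional_measure \<Omega> G)" by measurable
    have m2: "(\<lambda>p. max (- Y p) 0) \<in> borel_measurable (optional_measure \<Omega> G)" by measurable
    obtain H1 E1 where 1: "H1 \<in> borel_measurable PM" "E1 \<in> SS" "E1 \<in> null_sets M"
      "\<forall>\<omega>\<in>\<Omega> - E1. R \<omega> < \<infinity> \<longrightarrow> max (Y (enn2real (R \<omega>), \<omega>)) 0 = H1 (Phi R \<omega>)"
      using rep_nn[OF m1] by auto
    obtain H2 E2 where 2: "H2 \<in> borel_measurable PM" "E2 \<in> SS" "E2 \<in> null_sets M"
      "\<forall>\<omega>\<in>\<Omega> - E2. R \<omega> < \<infinity> \<longrightarrow> max (- Y (enn2real (R \<omega>), \<omega>)) 0 = H2 (Phi R \<omega>)"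
      using rep_nn[OF m2] by auto
    have "E1 \<union> E2 \<in> SS" using 1(2) 2(2) by (rule sigma_sets_Un)
    moreover have "E1 \<union> E2 \<in> null_sets M" using 1(3) 2(3) by (rule null_sets.Un)
    moreover have hm: "(\<lambda>z. H1 z - H2 z) \<in> borel_measurable PM" using 1(1) 2(1) by (rule borel_measurable_diff)
    moreover have "\<forall>\<omega>\<in>\<Omega> - (E1 \<union> E2). R \<omega> < \<infinity> \<longrightarrow> Y (enn2real (R \<omega>), \<omega>) = H1 (Phi R \<omega>) - H2 (Phi R \<omega>)"
    proof (intro ballI impI)
      fix \<omega> assume w: "\<omega> \<in> \<Omega> - (E1 \<union> E2)" "R \<omega> < \<infinity>"
      then have "max (Y (enn2real (R \<omega>), \<omega>)) 0 = H1 (Phi R \<omega>)" "max (- Y (enn2real (R \<omega>), \<omega>)) 0 = H2 (Phi R \<omega>)"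
        using 1(4) 2(4) by auto
      then show "Y (enn2real (R \<omega>), \<omega>) = H1 (Phi R \<omega>) - H2 (Phi R \<omega>)" by (auto simp: max_def split: if_splits)
    qed
    ultimately show ?thesis by (intro bexI[OF _ hm] exI[of _ "E1 \<union> E2"]) auto
  qed
  show "graph_rt \<Omega> R \<in> Lo M F \<tau>" unfolding Lo_def
  proof (intro CollectI conjI allI impI)
    show "graph_rt \<Omega> R \<in> optional_sets \<Omega> G" by (rule graph_opt[OF R])
    fix Y :: "real \<times> 'a \<Rightarrow> real" assume Y: "Y \<in> borel_measurable (optional_measure \<Omega> G)"
    from rep[OF Y] obtain H E where H: "H \<in> borel_measurable PM" "E \<in> SS" "E \<in> null_sets M"
      "\<forall>\<omega>\<in>\<Omega> - E. R \<omega> < \<infinity> \<longrightarrow> Y (enn2real (R \<omega>), \<omega>) = H (Phi R \<omega>)" by blast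
    have [measurable]: "H \<in> borel_measurable PM" by (rule H(1))
    have m1: "(\<lambda>p. H (top, p)) \<in> borel_measurable (optional_measure \<Omega> F)" by measurable
    have m2: "(\<lambda>(u::ennreal, p). H (u, p)) \<in> borel_measurable PM" using H(1) by simp
    have idt: "\<forall>\<omega>\<in>\<Omega> - E. \<forall>t\<ge>0. (t, \<omega>) \<in> graph_rt \<Omega> R \<longrightarrow>
        Y (t, \<omega>) = (if ennreal t < \<tau> \<omega> then H (top, (t, \<omega>)) else H (\<tau> \<omega>, (t, \<omega>)))"
    proof (intro ballI allI impI)
      fix \<omega> t assume w: "\<omega> \<in> \<Omega> - E" and t: "t \<ge> 0" "(t, \<omega>) \<in> graph_rt \<Omega> R"
      then have Rt: "R \<omega> = ennreal t" unfolding graph_rt_def by auto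
      have Rlt: "R \<omega> < \<infinity>" using Rt by simp
      have "Y (enn2real (R \<omega>), \<omega>) = H (Phi R \<omega>)" using H(4) w Rlt by blast
      moreover have "enn2real (R \<omega>) = t" using Rt t by simp
      ultimately have "Y (t, \<omega>) = H (Phi R \<omega>)" by simp
      then show "Y (t, \<omega>) = (if ennreal t < \<tau> \<omega> then H (top, (t, \<omega>)) else H (\<tau> \<omega>, (t, \<omega>)))"
        using Rt t by (auto simp: Phi_def ndiv_def not_le)
    qed
    have ES: "E \<in> sets M" "emeasure M E = 0" using H(3) by auto
    show "splits_on M F \<tau> Y (graph_rt \<Omega> R)" unfolding splits_on_def
      by (intro exI[of _ "\<lambda>p. H (top, p)"] exI[of _ "\<lambda>u p. H (u, p)"] conjI exI[of _ E])
         (use m1 m2 idt H(2) ES in auto)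
  qed
qed

theorem main: assumes R: "stp R"
  shows "graph_rt \<Omega> R \<in> Lo M F \<tau> \<longleftrightarrow>
    trace_on {\<omega>\<in>\<Omega>. R \<omega> < \<infinity>} (GR R) = trace_on {\<omega>\<in>\<Omega>. R \<omega> < \<infinity>} (RHS R)"
  using sub1[OF R] stepII[OF R] stepIII[OF R] by blast

end

theorem mainTheorem7:
  fixes M :: "'a measure" and F :: "real \<Rightarrow> 'a set set"
    and \<tau> R :: "'a \<Rightarrow> ennreal"
  assumes "prob_space M"
    and "usual_filtration M F"
    and "\<tau> \<in> borel_measurable M"
    and "stopping_time_wrt (space M) (Gfilt M F \<tau>) R"
  shows "graph_rt (space M) R \<in> Lo M F \<tau> \<longleftrightarrow>
    trace_on {\<omega>\<in>space M. R \<omega> < \<infinity>} (stopped_sigma (space M) (Gfilt M F \<tau>) R) =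
    trace_on {\<omega>\<in>space M. R \<omega> < \<infinity>}
      (sigma_sets (space M) (Nsig M F \<tau> \<union> sigma_fun (space M) (\<lambda>\<omega>. ndiv (\<tau> \<omega>) (R \<omega>))
                             \<union> random_time_sigma (space M) F R))"
proof -
  interpret setting M F \<tau> using assms(2,3) by unfold_locales
  show ?thesis using main[OF assms(4)] by simp
qed

end
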